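(* Let $\Phi\in[0,2\pi)$ with $\Phi/(2\pi)\notin\mathbb Q$ and let $\theta\in[0,2\pi)$. Then the magnetic walk $W_\Phi$ on $\ell^2(\mathbb Z^2)\otimes\mathbb C^2$ and the unitary critical almost Mathieu operator $\widetilde W_\Phi$ on $\ell^2(\mathbb Z)\otimes\mathbb C^2$ (both defined below) have the same spectrum as subsets of $\mathbb C$: $\sigma(W_\Phi)=\sigma(\widetilde W_\Phi)$.
   Context: Magnetic walk: $\mathcal H=\ell^2(\mathbb Z^2)\otimes\mathbb C^2$ has basis $|x,s\rangle$, $x\in\mathbb Z^2$, $s\in\{\pm1\}$; $T_1|x\rangle=e^{-ix_2\Phi/2}|x+e_1\rangle$, $T_2|x\rangle=e^{ix_1\Phi/2}|x+e_2\rangle$ on $\ell^2(\mathbb Z^2)$; $\mathrm{diag}(T,T^* )$ acts as $T$ on the $s=+1$ component and as $T^*$ on the $s=-1$ component; $C_H=\frac1{\sqrt2}\begin{pmatrix}1&1\\1&-1\end{pmatrix}$ acts on $\mathbb C^2$; $W_\Phi=\mathrm{diag}(T_1,T_1^* )(\mathbb 1\otimes C_H)\mathrm{diag}(T_2,T_2^* )(\mathbb 1\otimes C_H)$. Unitary critical almost Mathieu operator: on $\ell^2(\mathbb Z)\otimes\mathbb C^2$ with basis $|x,s\rangle$, $x\in\mathbb Z$, $s\in\{\pm1\}$, let $S|x,s\rangle=|x+s,s\rangle$ and let $C_2(\Phi)$ act as $|x\rangle\otimes\psi\mapsto|x\rangle\otimes C_2(\Phi,x)\psi$ with $C_2(\Phi,x)=\begin{pmatrix}\cos(\Phi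 x+\theta)&-\sin(\Phi x+\theta)\\ \sin(\Phi x+\theta)&\cos(\Phi x+\theta)\end{pmatrix}$. Then $\widetilde W_\Phi=S\,C_2(\Phi)$. *)

theory Defs
  imports "HOL-Analysis.Analysis"
begin

datatype spin = Up | Down

definition spin_val :: "spin \<Rightarrow> int" where
  "spin_val s = (if s = Up then 1 else -1)"

definition l2 :: "('i \<Rightarrow> complex) set" where
  "l2 = {f. (\<lambda>i. (cmod (f i))\<^sup>2) summable_on UNIV}"

definition l2norm :: "('i \<Rightarrow> complex) \<Rightarrow> real" where
  "l2norm f = sqrt (\<Sum>\<^sub>\<infinity>i. (cmod (f i))\<^sup>2)"

definition op_spectrum :: "(('i \<Rightarrow> complex) \<Rightarrow> ('i \<Rightarrow> complex)) \<Rightarrow> complex set" where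
  "op_spectrum A = {z. \<not> (\<exists>B.
      (\<forall>f\<in>l2. B f \<in> l2) \<and>
      (\<forall>f\<in>l2. \<forall>g\<in>l2. \<forall>a b. B (\<lambda>i. a * f i + b * g i) = (\<lambda>i. a * B f i + b * B g i)) \<and>
      (\<exists>C. \<forall>f\<in>l2. l2norm (B f) \<le> C * l2norm f) \<and>
      (\<forall>f\<in>l2. B (\<lambda>i. A f i - z * f i) = f) \<and>
      (\<forall>f\<in>l2. (\<lambda>i. A (B f) i - z * B f i) = f))}"

(* Magnetic translations on ell^2(Z^2), in coefficient form:
   T1|x> = e^{-i x2 Phi/2}|x+e1>, T2|x> = e^{i x1 Phi/2}|x+e2>, and adjoints. *)
definition T1 :: "real \<Rightarrow> (int \<times> int \<Rightarrow> complex) \<Rightarrow> (int \<times> int \<Rightarrow> complex)" where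
  "T1 \<Phi> \<psi> = (\<lambda>(y1, y2). cis (- (of_int y2 * \<Phi> / 2)) * \<psi> (y1 - 1, y2))"

definition T1adj :: "real \<Rightarrow> (int \<times> int \<Rightarrow> complex) \<Rightarrow> (int \<times> int \<Rightarrow> complex)" where
  "T1adj \<Phi> \<psi> = (\<lambda>(x1, x2). cis (of_int x2 * \<Phi> / 2) * \<psi> (x1 + 1, x2))"

definition T2 :: "real \<Rightarrow> (int \<times> int \<Rightarrow> complex) \<Rightarrow> (int \<times> int \<Rightarrow> complex)" where
  "T2 \<Phi> \<psi> = (\<lambda>(y1, y2). cis (of_int y1 * \<Phi> / 2) * \<psi> (y1, y2 - 1))"

definition T2adj :: "real \<Rightarrow> (int \<times> int \<Rightarrow> complex) \<Rightarrow> (int \<times> int \<Rightarrow> complex)" where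
  "T2adj \<Phi> \<psi> = (\<lambda>(x1, x2). cis (- (of_int x1 * \<Phi> / 2)) * \<psi> (x1, x2 + 1))"

definition diagTT :: "(('x \<Rightarrow> complex) \<Rightarrow> ('x \<Rightarrow> complex)) \<Rightarrow> (('x \<Rightarrow> complex) \<Rightarrow> ('x \<Rightarrow> complex))
    \<Rightarrow> ('x \<times> spin \<Rightarrow> complex) \<Rightarrow> ('x \<times> spin \<Rightarrow> complex)" where
  "diagTT T Tadj \<psi> = (\<lambda>(x, s). if s = Up then T (\<lambda>y. \<psi> (y, Up)) x
                                  else Tadj (\<lambda>y. \<psi> (y, Down)) x)"

definition coinH :: "('x \<times> spin \<Rightarrow> complex) \<Rightarrow> ('x \<times> spin \<Rightarrow> complex)" where
  "coinH \<psi> = (\<lambda>(x, s). if s = Up then (\<psi> (x, Up) + \<psi> (x, Down)) / of_real (sqrt 2)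
                          else (\<psi> (x, Up) - \<psi> (x, Down)) / of_real (sqrt 2))"

definition magW :: "real \<Rightarrow> ((int \<times> int) \<times> spin \<Rightarrow> complex) \<Rightarrow> ((int \<times> int) \<times> spin \<Rightarrow> complex)" where
  "magW \<Phi> = diagTT (T1 \<Phi>) (T1adj \<Phi>) \<circ> coinH \<circ> diagTT (T2 \<Phi>) (T2adj \<Phi>) \<circ> coinH"

definition shiftS :: "(int \<times> spin \<Rightarrow> complex) \<Rightarrow> (int \<times> spin \<Rightarrow> complex)" where
  "shiftS \<psi> = (\<lambda>(y, s). \<psi> (y - spin_val s, s))"

definition coinRot :: "real \<Rightarrow> real \<Rightarrow> (int \<times> spin \<Rightarrow> complex) \<Rightarrow> (int \<times> spin \<Rightarrow> complex)" where
  "coinRot \<Phi> \<theta> \<psi> = (\<lambda>(x, s). let a = \<Phi> * of_int x + \<theta> in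
      if s = Up then of_real (cos a) * \<psi> (x, Up) - of_real (sin a) * \<psi> (x, Down)
      else of_real (sin a) * \<psi> (x, Up) + of_real (cos a) * \<psi> (x, Down))"

definition uamoW :: "real \<Rightarrow> real \<Rightarrow> (int \<times> spin \<Rightarrow> complex) \<Rightarrow> (int \<times> spin \<Rightarrow> complex)" where
  "uamoW \<Phi> \<theta> = shiftS \<circ> coinRot \<Phi> \<theta>"

end

theory Submission
  imports Defs "HOL-Analysis.Kronecker_Approximation_Theorem"
begin


lemma l2_sum_le:
  assumes "f \<in> l2" "finite F"
  shows "(\<Sum>i\<in>F. (cmod (f i))\<^sup>2) \<le> (l2norm f)\<^sup>2"
proof -
  have s: "(\<lambda>i. (cmod (f i))\<^sup>2) summable_on UNIV" using assms(1) by (simp add: l2_def)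
  have "(\<Sum>i\<in>F. (cmod (f i))\<^sup>2) \<le> (\<Sum>\<^sub>\<infinity>i. (cmod (f i))\<^sup>2)"
    by (rule finite_sum_le_infsum[OF s assms(2)]) auto
  moreover have "(\<Sum>\<^sub>\<infinity>i. (cmod (f i))\<^sup>2) \<ge> 0" by (simp add: infsum_nonneg)
  ultimately show ?thesis by (simp add: l2norm_def)
qed

lemma l2norm_nonneg: "l2norm f \<ge> 0"
  unfolding l2norm_def by (rule real_sqrt_ge_zero, rule infsum_nonneg) simp

lemma l2_from_bound:
  assumes "\<And>F. finite F \<Longrightarrow> (\<Sum>i\<in>F. (cmod (g i))\<^sup>2) \<le> K\<^sup>2" "K \<ge> 0"
  shows "g \<in> l2 \<and> l2norm g \<le> K"
proof -
  have s: "(\<lambda>i. (cmod (g i))\<^sup>2) summable_on UNIV"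
    apply (rule nonneg_bdd_above_summable_on)
    using assms(1) by (auto intro!: bdd_aboveI)
  have "(\<Sum>\<^sub>\<infinity>i. (cmod (g i))\<^sup>2) \<le> K\<^sup>2"
    by (rule infsum_le_finite_sums[OF s]) (use assms in auto)
  then have "l2norm g \<le> sqrt (K\<^sup>2)" unfolding l2norm_def using real_sqrt_le_mono by blast
  then show ?thesis using s assms(2) by (simp add: l2_def)
qed

lemma l2_pt:
  assumes "f \<in> l2" shows "cmod (f i) \<le> l2norm f"
proof -
  have "(\<Sum>j\<in>{i}. (cmod (f j))\<^sup>2) \<le> (l2norm f)\<^sup>2" by (rule l2_sum_le[OF assms]) auto
  then have "(cmod (f i))\<^sup>2 \<le> (l2norm f)\<^sup>2" by simp
  then show ?thesis using l2norm_nonneg[of f] by (rule power2_le_imp_le)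
qed

lemma l2norm_eq0:
  assumes "f \<in> l2" "l2norm f = 0" shows "f i = 0"
  using l2_pt[OF assms(1), of i] assms(2) by simp

lemma l2_cong_norm:
  assumes "\<And>i. cmod (f i) = cmod (g i)"
  shows "(f \<in> l2) = (g \<in> l2)" and "l2norm f = l2norm g"
  using assms by (simp_all add: l2_def l2norm_def)

lemma finsupp_l2:
  assumes "finite S" "\<And>i. i \<notin> S \<Longrightarrow> f i = 0"
  shows "f \<in> l2" and "l2norm f = sqrt (\<Sum>i\<in>S. (cmod (f i))\<^sup>2)"
proof -
  have hS: "((\<lambda>i. (cmod (f i))\<^sup>2) has_sum (\<Sum>i\<in>S. (cmod (f i))\<^sup>2)) S"
    by (rule has_sum_finiteI[OF assms(1)]) simp
  have h: "((\<lambda>i. (cmod (f i))\<^sup>2) has_sum (\<Sum>i\<in>S. (cmod (f i))\<^sup>2)) UNIV"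
    using has_sum_cong_neutral[of UNIV S "\<lambda>i. (cmod (f i))\<^sup>2" "\<lambda>i. (cmod (f i))\<^sup>2"] hS assms(2) by auto
  show "f \<in> l2" using h by (auto simp: l2_def summable_on_def)
  show "l2norm f = sqrt (\<Sum>i\<in>S. (cmod (f i))\<^sup>2)" using h by (simp add: l2norm_def infsumI)
qed

lemma finsupp_l2':
  assumes "finite {i. f i \<noteq> 0}" shows "f \<in> l2"
  using finsupp_l2(1)[OF assms] by auto

lemma l2_add:
  assumes "f \<in> l2" "g \<in> l2"
  shows "(\<lambda>i. f i + g i) \<in> l2 \<and> l2norm (\<lambda>i. f i + g i) \<le> l2norm f + l2norm g"
proof (rule l2_from_bound)
  fix F :: "'a set" assume F: "finite F"
  have "L2_set (\<lambda>i. cmod (f i + g i)) F \<le> L2_set (\<lambda>i. cmod (f i) + cmod (g i)) F"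
    by (rule L2_set_mono) (auto simp: norm_triangle_ineq)
  also have "\<dots> \<le> L2_set (\<lambda>i. cmod (f i)) F + L2_set (\<lambda>i. cmod (g i)) F"
    by (rule L2_set_triangle_ineq)
  also have "L2_set (\<lambda>i. cmod (f i)) F \<le> l2norm f"
    unfolding L2_set_def using l2_sum_le[OF assms(1) F] l2norm_nonneg[of f]
    by (simp add: real_le_lsqrt)
  also have "L2_set (\<lambda>i. cmod (g i)) F \<le> l2norm g"
    unfolding L2_set_def using l2_sum_le[OF assms(2) F] l2norm_nonneg[of g]
    by (simp add: real_le_lsqrt)
  finally have "L2_set (\<lambda>i. cmod (f i + g i)) F \<le> l2norm f + l2norm g" by simp
  then have "(L2_set (\<lambda>i. cmod (f i + g i)) F)\<^sup>2 \<le> (l2norm f + l2norm g)\<^sup>2"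
    by (rule power_mono) (rule L2_set_nonneg)
  also have "(L2_set (\<lambda>i. cmod (f i + g i)) F)\<^sup>2 = (\<Sum>i\<in>F. (cmod (f i + g i))\<^sup>2)"
    unfolding L2_set_def by (rule real_sqrt_pow2) (simp add: sum_nonneg)
  finally show "(\<Sum>i\<in>F. (cmod (f i + g i))\<^sup>2) \<le> (l2norm f + l2norm g)\<^sup>2" .
qed (simp add: l2norm_nonneg add_nonneg_nonneg)

lemma l2_scale:
  assumes "f \<in> l2"
  shows "(\<lambda>i. c * f i) \<in> l2 \<and> l2norm (\<lambda>i. c * f i) = cmod c * l2norm f"
proof -
  have s: "(\<lambda>i. (cmod (f i))\<^sup>2) summable_on UNIV" using assms by (simp add: l2_def)
  have e: "(\<lambda>i. (cmod (c * f i))\<^sup>2) = (\<lambda>i. (cmod c)\<^sup>2 * (cmod (f i))\<^sup>2)"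
    by (simp add: norm_mult power_mult_distrib)
  have "(\<lambda>i. (cmod c)\<^sup>2 * (cmod (f i))\<^sup>2) summable_on UNIV"
    using s by (rule summable_on_cmult_right)
  moreover have "(\<Sum>\<^sub>\<infinity>i. (cmod c)\<^sup>2 * (cmod (f i))\<^sup>2) = (cmod c)\<^sup>2 * (\<Sum>\<^sub>\<infinity>i. (cmod (f i))\<^sup>2)"
    by (rule infsum_cmult_right') 
  ultimately have "(\<lambda>i. (cmod (c * f i))\<^sup>2) summable_on UNIV" 
     "(\<Sum>\<^sub>\<infinity>i. (cmod (c * f i))\<^sup>2) = (cmod c)\<^sup>2 * (\<Sum>\<^sub>\<infinity>i. (cmod (f i))\<^sup>2)"
    by (simp_all only: e)
  then show ?thesis unfolding l2_def l2norm_def by (simp add: real_sqrt_mult)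
qed

lemma l2_lin:
  assumes "f \<in> l2" "g \<in> l2"
  shows "(\<lambda>i. a * f i + b * g i) \<in> l2 \<and> l2norm (\<lambda>i. a * f i + b * g i) \<le> cmod a * l2norm f + cmod b * l2norm g"
proof -
  have a: "(\<lambda>i. a * f i) \<in> l2 \<and> l2norm (\<lambda>i. a * f i) = cmod a * l2norm f" by (rule l2_scale[OF assms(1)])
  have b: "(\<lambda>i. b * g i) \<in> l2 \<and> l2norm (\<lambda>i. b * g i) = cmod b * l2norm g" by (rule l2_scale[OF assms(2)])
  show ?thesis using l2_add[of "\<lambda>i. a * f i" "\<lambda>i. b * g i"] a b by simp
qed

lemma l2_diff:
  assumes "f \<in> l2" "g \<in> l2"
  shows "(\<lambda>i. f i - g i) \<in> l2 \<and> l2norm (\<lambda>i. f i - g i) \<le> l2norm f + l2norm g"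
  using l2_lin[OF assms, of 1 "-1"] by simp

lemma l2_diff_rev:
  assumes "f \<in> l2" "g \<in> l2"
  shows "l2norm f \<le> l2norm (\<lambda>i. f i - g i) + l2norm g"
  using l2_add[OF l2_diff[OF assms, THEN conjunct1] assms(2)] by simp

lemma l2_zero: "(\<lambda>i. 0) \<in> l2" "l2norm (\<lambda>i. 0) = 0"
  using finsupp_l2[of "{}" "\<lambda>i. 0"] by auto

lemma l2_trunc:
  assumes "f \<in> l2" "\<delta> > 0"
  shows "\<exists>F. finite F \<and> l2norm (\<lambda>i. if i \<in> F then 0 else f i) \<le> \<delta>"
proof -
  have s: "(\<lambda>i. (cmod (f i))\<^sup>2) summable_on UNIV" using assms by (simp add: l2_def)
  define T where "T = (\<Sum>\<^sub>\<infinity>i. (cmod (f i))\<^sup>2)"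
  have T: "T = (SUP F\<in>{F. finite F \<and> F \<subseteq> UNIV}. (\<Sum>i\<in>F. (cmod (f i))\<^sup>2))"
    unfolding T_def by (rule infsum_nonneg_is_SUPREMUM_real[OF s]) auto
  have bdd: "bdd_above ((\<lambda>F. \<Sum>i\<in>F. (cmod (f i))\<^sup>2) ` {F. finite F \<and> F \<subseteq> UNIV})"
    using l2_sum_le[OF assms(1)] by (auto intro!: bdd_aboveI)
  have "T - \<delta>\<^sup>2 < T" using assms(2) by simp
  then obtain F where F: "finite F" "T - \<delta>\<^sup>2 < (\<Sum>i\<in>F. (cmod (f i))\<^sup>2)"
  proof -
    have ne: "{F. finite F \<and> F \<subseteq> (UNIV::'a set)} \<noteq> {}" by auto
    from \<open>T - \<delta>\<^sup>2 < T\<close> have "\<exists>F\<in>{F. finite F \<and> F \<subseteq> UNIV}. T - \<delta>\<^sup>2 < (\<Sum>i\<in>F. (cmod (f i))\<^sup>2)"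
      unfolding T by (subst (asm) less_cSUP_iff[OF ne bdd]) 
    then show ?thesis using that by auto
  qed
  have "(\<lambda>i. if i \<in> F then 0 else f i) \<in> l2 \<and> l2norm (\<lambda>i. if i \<in> F then 0 else f i) \<le> \<delta>"
  proof (rule l2_from_bound)
    fix G :: "'a set" assume G: "finite G"
    have "(\<Sum>i\<in>G. (cmod (if i \<in> F then 0 else f i))\<^sup>2) = (\<Sum>i\<in>G - F. (cmod (f i))\<^sup>2)"
      using G by (intro sum.mono_neutral_cong_right) auto
    also have "\<dots> = (\<Sum>i\<in>(G - F) \<union> F. (cmod (f i))\<^sup>2) - (\<Sum>i\<in>F. (cmod (f i))\<^sup>2)"
      using G F(1) by (subst sum.union_disjoint) auto
    also have "(G - F) \<union> F = G \<union> F" by auto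
    also have "(\<Sum>i\<in>G \<union> F. (cmod (f i))\<^sup>2) \<le> T"
    proof -
      have "(\<Sum>i\<in>G \<union> F. (cmod (f i))\<^sup>2) \<le> (l2norm f)\<^sup>2" using l2_sum_le[OF assms(1), of "G \<union> F"] G F(1) by simp
      also have "(l2norm f)\<^sup>2 = T" unfolding T_def l2norm_def by (rule real_sqrt_pow2, rule infsum_nonneg) simp
      finally show ?thesis .
    qed
    finally show "(\<Sum>i\<in>G. (cmod (if i \<in> F then 0 else f i))\<^sup>2) \<le> \<delta>\<^sup>2" using F(2) by linarith
  qed (use assms in simp)
  then show ?thesis using F(1) by blast
qed


definition linop :: "(('i \<Rightarrow> complex) \<Rightarrow> ('i \<Rightarrow> complex)) \<Rightarrow> bool" where
  "linop A \<longleftrightarrow> (\<forall>f g a b. A (\<lambda>i. a * f i + b * g i) = (\<lambda>i. a * A f i + b * A g i))"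

definition contr :: "(('i \<Rightarrow> complex) \<Rightarrow> ('j \<Rightarrow> complex)) \<Rightarrow> bool" where
  "contr A \<longleftrightarrow> (\<forall>f\<in>l2. A f \<in> l2 \<and> l2norm (A f) \<le> l2norm f)"

definition localop :: "(('i \<Rightarrow> complex) \<Rightarrow> ('j \<Rightarrow> complex)) \<Rightarrow> bool" where
  "localop A \<longleftrightarrow> (\<forall>F f. (\<forall>i. (\<lambda>n. F n i) \<longlonglongrightarrow> f i) \<longrightarrow> (\<forall>j. (\<lambda>n. A (F n) j) \<longlonglongrightarrow> A f j))"

definition goodlin :: "(('i \<Rightarrow> complex) \<Rightarrow> ('i \<Rightarrow> complex)) \<Rightarrow> bool" where
  "goodlin A \<longleftrightarrow> linop A \<and> contr A \<and> localop A"

definition Az :: "(('i \<Rightarrow> complex) \<Rightarrow> ('i \<Rightarrow> complex)) \<Rightarrow> complex \<Rightarrow> ('i \<Rightarrow> complex) \<Rightarrow> ('i \<Rightarrow> complex)" where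
  "Az A z f = (\<lambda>i. A f i - z * f i)"

definition AEfin :: "(('i \<Rightarrow> complex) \<Rightarrow> ('i \<Rightarrow> complex)) \<Rightarrow> complex \<Rightarrow> bool" where
  "AEfin A z \<longleftrightarrow> (\<forall>\<epsilon>>0. \<exists>f. finite {i. f i \<noteq> 0} \<and> (\<exists>i. f i \<noteq> 0) \<and> l2norm (Az A z f) \<le> \<epsilon> * l2norm f)"

lemma linopD: "linop A \<Longrightarrow> A (\<lambda>i. a * f i + b * g i) = (\<lambda>i. a * A f i + b * A g i)"
  unfolding linop_def by blast

lemma linop_zero: "linop A \<Longrightarrow> A (\<lambda>i. 0) = (\<lambda>i. 0)"
  using linopD[of A 0 "\<lambda>i. 0" 0 "\<lambda>i. 0"] by simp

lemma linop_add: "linop A \<Longrightarrow> A (\<lambda>i. f i + g i) = (\<lambda>i. A f i + A g i)"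
  using linopD[of A 1 f 1 g] by simp

lemma linop_diff: "linop A \<Longrightarrow> A (\<lambda>i. f i - g i) = (\<lambda>i. A f i - A g i)"
  using linopD[of A 1 f "-1" g] by simp

lemma linop_scale: "linop A \<Longrightarrow> A (\<lambda>i. c * f i) = (\<lambda>i. c * A f i)"
  using linopD[of A c f 0 f] by simp

lemma linop_eta: "linop A \<Longrightarrow> A (\<lambda>i. f i) = A f" by simp

lemma linop_sum:
  assumes "linop A" "finite S"
  shows "A (\<lambda>i. \<Sum>n\<in>S. h n i) = (\<lambda>i. \<Sum>n\<in>S. A (h n) i)"
  using assms(2)
proof (induction S rule: finite_induct)
  case empty then show ?case using linop_zero[OF assms(1)] by simp
next
  case (insert x F)
  have "A (\<lambda>i. \<Sum>n\<in>insert x F. h n i) = A (\<lambda>i. h x i + (\<Sum>n\<in>F. h n i))"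
    using insert by simp
  also have "\<dots> = (\<lambda>i. A (h x) i + A (\<lambda>i. \<Sum>n\<in>F. h n i) i)"
    using linop_add[OF assms(1), of "h x" "\<lambda>i. \<Sum>n\<in>F. h n i"] by simp
  finally show ?case using insert by simp
qed

lemma linop_comp: "linop A \<Longrightarrow> linop B \<Longrightarrow> linop (A \<circ> B)"
  unfolding linop_def by simp

lemma contr_comp: "contr A \<Longrightarrow> contr B \<Longrightarrow> contr (A \<circ> B)"
  unfolding contr_def comp_def
proof (intro ballI conjI)
  fix f :: "'c \<Rightarrow> complex" assume A: "\<forall>f\<in>l2. A f \<in> l2 \<and> l2norm (A f) \<le> l2norm f"
    and B: "\<forall>f\<in>l2. B f \<in> l2 \<and> l2norm (B f) \<le> l2norm f" and f: "f \<in> l2"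
  then have "B f \<in> l2" "l2norm (B f) \<le> l2norm f" by auto
  then show "A (B f) \<in> l2" "l2norm (A (B f)) \<le> l2norm f" using A by (auto intro: order.trans)
qed

lemma localop_comp: "localop A \<Longrightarrow> localop B \<Longrightarrow> localop (A \<circ> B)"
  unfolding localop_def comp_def by simp

lemma goodlin_comp: "goodlin A \<Longrightarrow> goodlin B \<Longrightarrow> goodlin (A \<circ> B)"
  unfolding goodlin_def using linop_comp contr_comp localop_comp by blast

lemma goodlin_id: "goodlin id"
  unfolding goodlin_def linop_def contr_def localop_def by simp

lemma goodlin_pow: "goodlin A \<Longrightarrow> goodlin (A ^^ n)"
  by (induction n) (simp_all add: goodlin_id goodlin_comp)

lemma goodlinD: 
  assumes "goodlin A"
  shows "linop A" "contr A" "localop A"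
  using assms unfolding goodlin_def by auto

lemma contrD:
  assumes "contr A" "f \<in> l2" shows "A f \<in> l2" "l2norm (A f) \<le> l2norm f"
  using assms unfolding contr_def by auto

lemma localopD:
  assumes "localop A" "\<And>i. (\<lambda>n. F n i) \<longlonglongrightarrow> f i"
  shows "(\<lambda>n. A (F n) j) \<longlonglongrightarrow> A f j"
  using assms unfolding localop_def by blast

lemma l2_sum:
  assumes "finite S" "\<And>n. n \<in> S \<Longrightarrow> h n \<in> l2"
  shows "(\<lambda>i. \<Sum>n\<in>S. h n i) \<in> l2 \<and> l2norm (\<lambda>i. \<Sum>n\<in>S. h n i) \<le> (\<Sum>n\<in>S. l2norm (h n))"
  using assms
proof (induction S rule: finite_induct)
  case empty then show ?case by (simp add: l2_zero)
next
  case (insert x F)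
  then have IH: "(\<lambda>i. \<Sum>n\<in>F. h n i) \<in> l2 \<and> l2norm (\<lambda>i. \<Sum>n\<in>F. h n i) \<le> (\<Sum>n\<in>F. l2norm (h n))" by auto
  have hx: "h x \<in> l2" using insert by auto
  have "(\<lambda>i. h x i + (\<Sum>n\<in>F. h n i)) \<in> l2 \<and> l2norm (\<lambda>i. h x i + (\<Sum>n\<in>F. h n i)) \<le> l2norm (h x) + l2norm (\<lambda>i. \<Sum>n\<in>F. h n i)"
    by (rule l2_add[OF hx IH[THEN conjunct1]])
  then show ?case using insert IH by auto
qed

lemma Az_l2:
  assumes "contr A" "f \<in> l2"
  shows "Az A z f \<in> l2" "l2norm (Az A z f) \<le> (1 + cmod z) * l2norm f"
proof -
  have a: "A f \<in> l2" "l2norm (A f) \<le> l2norm f" using contrD[OF assms] by auto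
  have "(\<lambda>i. 1 * A f i + (- z) * f i) \<in> l2 \<and> l2norm (\<lambda>i. 1 * A f i + (- z) * f i) \<le> cmod 1 * l2norm (A f) + cmod (-z) * l2norm f"
    by (rule l2_lin[OF a(1) assms(2)])
  then show "Az A z f \<in> l2" "l2norm (Az A z f) \<le> (1 + cmod z) * l2norm f"
    using a by (auto simp: Az_def algebra_simps)
qed

lemma Az_lin:
  assumes "linop A"
  shows "Az A z (\<lambda>i. a * f i + b * g i) = (\<lambda>i. a * Az A z f i + b * Az A z g i)"
  using linopD[OF assms] by (simp add: Az_def algebra_simps)


lemma PL:
  fixes U :: "('i \<Rightarrow> complex) \<Rightarrow> ('i \<Rightarrow> complex)" and R :: "nat \<Rightarrow> ('i \<Rightarrow> complex) \<Rightarrow> ('i \<Rightarrow> complex)"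
  assumes gU: "linop U" "contr U" "localop U" and M: "M \<ge> 0"
    and Rl2: "\<And>n g. g \<in> l2 \<Longrightarrow> R n g \<in> l2 \<and> l2norm (R n g) \<le> M * l2norm g"
    and Rlin: "\<And>n f g a b. f \<in> l2 \<Longrightarrow> g \<in> l2 \<Longrightarrow> R n (\<lambda>i. a * f i + b * g i) = (\<lambda>i. a * R n f i + b * R n g i)"
    and Rconv: "\<And>g i. g \<in> l2 \<Longrightarrow> convergent (\<lambda>n. R n g i)"
    and R1: "\<And>g i. g \<in> l2 \<Longrightarrow> (\<lambda>n. Az U z (R n g) i) \<longlonglongrightarrow> g i"
    and R2: "\<And>f i. f \<in> l2 \<Longrightarrow> (\<lambda>n. R n (Az U z f) i) \<longlonglongrightarrow> f i"
  shows "z \<notin> op_spectrum U"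
proof -
  define B where "B g = (\<lambda>i. lim (\<lambda>n. R n g i))" for g
  have conv: "(\<lambda>n. R n g i) \<longlonglongrightarrow> B g i" if "g \<in> l2" for g i
    using Rconv[OF that, of i] unfolding B_def by (simp add: convergent_LIMSEQ_iff)
  have Bl2: "B g \<in> l2 \<and> l2norm (B g) \<le> M * l2norm g" if g: "g \<in> l2" for g
  proof (rule l2_from_bound)
    fix F :: "'i set" assume F: "finite F"
    have t: "(\<lambda>n. \<Sum>i\<in>F. (cmod (R n g i))\<^sup>2) \<longlonglongrightarrow> (\<Sum>i\<in>F. (cmod (B g i))\<^sup>2)"
      by (intro tendsto_sum tendsto_power tendsto_norm conv[OF g])
    have b: "(\<Sum>i\<in>F. (cmod (R n g i))\<^sup>2) \<le> (M * l2norm g)\<^sup>2" for n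
    proof -
      have "(\<Sum>i\<in>F. (cmod (R n g i))\<^sup>2) \<le> (l2norm (R n g))\<^sup>2" using l2_sum_le[OF _ F] Rl2[OF g] by blast
      also have "\<dots> \<le> (M * l2norm g)\<^sup>2" by (rule power_mono) (use Rl2[OF g] l2norm_nonneg in auto)
      finally show ?thesis .
    qed
    show "(\<Sum>i\<in>F. (cmod (B g i))\<^sup>2) \<le> (M * l2norm g)\<^sup>2"
      by (rule LIMSEQ_le_const2[OF t]) (use b in auto)
  qed (use M l2norm_nonneg[of g] in simp)
  have "\<exists>B. (\<forall>f\<in>l2. B f \<in> l2) \<and>
      (\<forall>f\<in>l2. \<forall>g\<in>l2. \<forall>a b. B (\<lambda>i. a * f i + b * g i) = (\<lambda>i. a * B f i + b * B g i)) \<and>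
      (\<exists>C. \<forall>f\<in>l2. l2norm (B f) \<le> C * l2norm f) \<and>
      (\<forall>f\<in>l2. B (\<lambda>i. U f i - z * f i) = f) \<and>
      (\<forall>f\<in>l2. (\<lambda>i. U (B f) i - z * B f i) = f)"
  proof (intro exI[of _ B] conjI ballI allI)
    fix f :: "'i \<Rightarrow> complex" assume "f \<in> l2" then show "B f \<in> l2" using Bl2 by auto
  next
    show "\<exists>C. \<forall>f\<in>(l2::('i \<Rightarrow> complex) set). l2norm (B f) \<le> C * l2norm f" using Bl2 by auto
  next
    fix f g :: "'i \<Rightarrow> complex" and a b :: complex assume f: "f \<in> l2" and g: "g \<in> l2"
    have fg: "(\<lambda>i. a * f i + b * g i) \<in> l2" using l2_lin[OF f g] by auto
    show "B (\<lambda>i. a * f i + b * g i) = (\<lambda>i. a * B f i + b * B g i)"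
    proof
      fix i
      have "(\<lambda>n. R n (\<lambda>i. a * f i + b * g i) i) \<longlonglongrightarrow> B (\<lambda>i. a * f i + b * g i) i" by (rule conv[OF fg])
      moreover have "(\<lambda>n. R n (\<lambda>i. a * f i + b * g i) i) \<longlonglongrightarrow> a * B f i + b * B g i"
        unfolding Rlin[OF f g] by (intro tendsto_intros conv f g)
      ultimately show "B (\<lambda>i. a * f i + b * g i) i = a * B f i + b * B g i" by (rule LIMSEQ_unique)
    qed
  next
    fix f :: "'i \<Rightarrow> complex" assume f: "f \<in> l2"
    have az: "Az U z f \<in> l2" by (rule Az_l2[OF gU(2) f])
    show "B (\<lambda>i. U f i - z * f i) = f"
    proof
      fix i
      have "(\<lambda>n. R n (Az U z f) i) \<longlonglongrightarrow> B (Az U z f) i" by (rule conv[OF az])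
      from LIMSEQ_unique[OF this R2[OF f]] show "B (\<lambda>i. U f i - z * f i) i = f i" by (simp add: Az_def)
    qed
  next
    fix f :: "'i \<Rightarrow> complex" assume f: "f \<in> l2"
    show "(\<lambda>i. U (B f) i - z * B f i) = f"
    proof
      fix i
      have "(\<lambda>n. U (R n f) i) \<longlonglongrightarrow> U (B f) i" by (rule localopD[OF gU(3)]) (rule conv[OF f])
      then have "(\<lambda>n. Az U z (R n f) i) \<longlonglongrightarrow> U (B f) i - z * B f i"
        unfolding Az_def by (intro tendsto_intros conv[OF f])
      from LIMSEQ_unique[OF this R1[OF f]] show "U (B f) i - z * B f i = f i" .
    qed
  qed
  then show ?thesis unfolding op_spectrum_def by blast
qed


lemma funpow_apply_Suc: "(U ^^ Suc n) f = (U ^^ n) (U f)"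
  by (simp add: funpow_Suc_right del: funpow.simps)

lemma neumann:
  fixes U :: "('i \<Rightarrow> complex) \<Rightarrow> ('i \<Rightarrow> complex)"
  assumes gU: "goodlin U" and w: "cmod w > 1"
  shows "w \<notin> op_spectrum U"
proof -
  define P where "P n = U ^^ n" for n
  have gP: "goodlin (P n)" for n unfolding P_def by (rule goodlin_pow[OF gU])
  have w0: "w \<noteq> 0" using w by auto
  define c where "c n = - 1 / w ^ Suc n" for n
  define R where "R N g = (\<lambda>i. \<Sum>n<N. c n * P n g i)" for N g
  define M where "M = 1 / (cmod w - 1)"
  have M0: "M \<ge> 0" using w by (simp add: M_def)
  have Pl2: "P n g \<in> l2" "l2norm (P n g) \<le> l2norm g" if "g \<in> l2" for n g
    using contrD[OF goodlinD(2)[OF gP] that] by auto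
  have Ppt: "cmod (P n g i) \<le> l2norm g" if "g \<in> l2" for n g i
    using l2_pt[OF Pl2(1)[OF that], of n i] Pl2(2)[OF that, of n] by linarith
  have geo: "(\<Sum>n<N. (1 / cmod w) ^ Suc n) \<le> M" for N
  proof -
    have S: "(\<Sum>n<N. (1 / cmod w) ^ n) \<le> 1 / (1 - 1 / cmod w)"
      using geometric_sum_less[of "1 / cmod w" "{..<N}"] w w0 by (simp add: less_imp_le)
    have "(\<Sum>n<N. (1 / cmod w) ^ Suc n) = (1 / cmod w) * (\<Sum>n<N. (1 / cmod w) ^ n)"
      by (simp add: sum_distrib_left)
    also have "\<dots> \<le> (1 / cmod w) * (1 / (1 - 1 / cmod w))"
      by (rule mult_left_mono[OF S]) simp
    also have "(1 / cmod w) * (1 / (1 - 1 / cmod w)) = M"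
      using w w0 by (simp add: M_def field_simps)
    finally show ?thesis .
  qed
  have Rl2: "R N g \<in> l2 \<and> l2norm (R N g) \<le> M * l2norm g" if g: "g \<in> l2" for N g
  proof -
    have "R N g \<in> l2 \<and> l2norm (R N g) \<le> (\<Sum>n<N. l2norm (\<lambda>i. c n * P n g i))"
      unfolding R_def by (rule l2_sum) (use l2_scale[OF Pl2(1)[OF g]] in auto)
    moreover have "(\<Sum>n<N. l2norm (\<lambda>i. c n * P n g i)) \<le> (\<Sum>n<N. (1 / cmod w) ^ Suc n * l2norm g)"
    proof (rule sum_mono)
      fix n
      have "l2norm (\<lambda>i. c n * P n g i) = cmod (c n) * l2norm (P n g)" using l2_scale[OF Pl2(1)[OF g]] by auto
      also have "\<dots> \<le> cmod (c n) * l2norm g" by (rule mult_left_mono[OF Pl2(2)[OF g]]) simp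
      also have "cmod (c n) = (1 / cmod w) ^ Suc n" by (simp add: c_def norm_divide norm_power norm_mult power_one_over)
      finally show "l2norm (\<lambda>i. c n * P n g i) \<le> (1 / cmod w) ^ Suc n * l2norm g" .
    qed
    moreover have "(\<Sum>n<N. (1 / cmod w) ^ Suc n * l2norm g) \<le> M * l2norm g"
      unfolding sum_distrib_right[symmetric] by (rule mult_right_mono[OF geo l2norm_nonneg])
    ultimately show ?thesis by linarith
  qed
  have Rlin: "R N (\<lambda>i. a * f i + b * g i) = (\<lambda>i. a * R N f i + b * R N g i)" for N f g a b
    unfolding R_def using linopD[OF goodlinD(1)[OF gP]]
    by (simp add: sum_distrib_left sum.distrib algebra_simps)
  have Rconv: "convergent (\<lambda>N. R N g i)" if g: "g \<in> l2" for g i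
  proof -
    have "summable (\<lambda>n. c n * P n g i)"
    proof (rule summable_comparison_test)
      show "\<exists>N. \<forall>n\<ge>N. norm (c n * P n g i) \<le> l2norm g * (1 / cmod w) ^ Suc n"
      proof (intro exI allI impI)
        fix n
        have "norm (c n * P n g i) = (1 / cmod w) ^ Suc n * cmod (P n g i)"
          by (simp add: c_def norm_mult norm_divide norm_power power_one_over del: power_Suc)
        also have "\<dots> \<le> (1 / cmod w) ^ Suc n * l2norm g" by (rule mult_left_mono[OF Ppt[OF g]]) simp
        finally show "norm (c n * P n g i) \<le> l2norm g * (1 / cmod w) ^ Suc n" by (simp add: mult.commute)
      qed
      have "summable (\<lambda>n. (l2norm g * (1 / cmod w)) * (1 / cmod w) ^ n)"
        by (rule summable_mult[OF summable_geometric]) (use w in \<open>simp add: divide_less_eq\<close>)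
      then show "summable (\<lambda>n. l2norm g * (1 / cmod w) ^ Suc n)" by (simp add: mult.assoc)
    qed
    then show ?thesis unfolding R_def using summable_LIMSEQ convergentI by blast
  qed
  have tel: "(\<Sum>n<N. c n * (P (Suc n) f i - w * P n f i)) = f i - P N f i / w ^ N" for N f i
  proof -
    have "(\<Sum>n<N. c n * (P (Suc n) f i - w * P n f i)) = (\<Sum>n<N. P n f i / w ^ n - P (Suc n) f i / w ^ Suc n)"
      by (rule sum.cong) (use w0 in \<open>auto simp: c_def field_simps\<close>)
    also have "\<dots> = P 0 f i / w ^ 0 - P N f i / w ^ N" by (rule sum_lessThan_telescope')
    finally show ?thesis by (simp add: P_def)
  qed
  have lim0: "(\<lambda>N. f i - P N f i / w ^ N) \<longlonglongrightarrow> f i" if f: "f \<in> l2" for f i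
  proof -
    have "(\<lambda>N. P N f i / w ^ N) \<longlonglongrightarrow> 0"
    proof (rule Lim_null_comparison)
      show "\<forall>\<^sub>F N in sequentially. norm (P N f i / w ^ N) \<le> l2norm f * (1 / cmod w) ^ N"
        using Ppt[OF f] by (auto simp: norm_divide norm_power power_one_over divide_right_mono intro!: always_eventually)
      show "(\<lambda>N. l2norm f * (1 / cmod w) ^ N) \<longlonglongrightarrow> 0"
        by (rule tendsto_mult_right_zero, rule LIMSEQ_power_zero) (use w in \<open>simp add: divide_less_eq\<close>)
    qed
    then show ?thesis using tendsto_diff[OF tendsto_const[of "f i"]] by fastforce
  qed
  have UP: "U (P n f) = P (Suc n) f" for n f by (simp add: P_def)
  have PU: "P n (U f) = P (Suc n) f" for n f unfolding P_def by (rule funpow_apply_Suc[symmetric])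
  have R1: "Az U w (R N g) = (\<lambda>i. g i - P N g i / w ^ N)" for N g
  proof -
    have "U (R N g) = (\<lambda>i. \<Sum>n<N. U (\<lambda>i. c n * P n g i) i)"
      unfolding R_def by (rule linop_sum[OF goodlinD(1)[OF gU]]) simp
    also have "\<dots> = (\<lambda>i. \<Sum>n<N. c n * P (Suc n) g i)"
      using linop_scale[OF goodlinD(1)[OF gU]] UP by simp
    finally show ?thesis unfolding Az_def
      by (simp add: R_def tel[symmetric] sum_subtractf sum_distrib_left algebra_simps)
  qed
  have R2: "R N (Az U w f) = (\<lambda>i. f i - P N f i / w ^ N)" for N f
  proof -
    have "P n (Az U w f) = (\<lambda>i. P (Suc n) f i - w * P n f i)" for n
      unfolding Az_def using linopD[OF goodlinD(1)[OF gP], of n 1 "U f" "-w" f] PU by simp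
    then show ?thesis unfolding R_def by (simp add: tel)
  qed
  show ?thesis
  proof (rule PL[OF goodlinD[OF gU] M0])
    show "\<And>n g. g \<in> l2 \<Longrightarrow> R n g \<in> l2 \<and> l2norm (R n g) \<le> M * l2norm g" by (rule Rl2)
    show "\<And>n f g a b. f \<in> l2 \<Longrightarrow> g \<in> l2 \<Longrightarrow> R n (\<lambda>i. a * f i + b * g i) = (\<lambda>i. a * R n f i + b * R n g i)"
      by (rule Rlin)
    show "\<And>g i. g \<in> l2 \<Longrightarrow> convergent (\<lambda>n. R n g i)" by (rule Rconv)
    show "\<And>g i. g \<in> l2 \<Longrightarrow> (\<lambda>n. Az U w (R n g) i) \<longlonglongrightarrow> g i" unfolding R1 by (rule lim0)
    show "\<And>f i. f \<in> l2 \<Longrightarrow> (\<lambda>n. R n (Az U w f) i) \<longlonglongrightarrow> f i" unfolding R2 by (rule lim0)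
  qed
qed


lemma not_spec_D:
  assumes "z \<notin> op_spectrum U"
  shows "\<exists>B. (\<forall>f\<in>l2. B f \<in> l2) \<and>
      (\<forall>f\<in>l2. \<forall>g\<in>l2. \<forall>a b. B (\<lambda>i. a * f i + b * g i) = (\<lambda>i. a * B f i + b * B g i)) \<and>
      (\<forall>f\<in>l2. B (Az U z f) = f) \<and> (\<forall>f\<in>l2. Az U z (B f) = f)"
  using assms unfolding op_spectrum_def Az_def by blast

lemma spec_if_AE:
  fixes U :: "('i \<Rightarrow> complex) \<Rightarrow> ('i \<Rightarrow> complex)"
  assumes cU: "contr U" and ae: "AEfin U z"
  shows "z \<in> op_spectrum U"
proof (rule ccontr)
  assume "z \<notin> op_spectrum U"
  then obtain B C where Bl2: "\<forall>f\<in>l2. B f \<in> l2" and BC: "\<forall>f\<in>l2. l2norm (B f) \<le> C * l2norm f"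
    and Binv: "\<forall>f\<in>l2. B (Az U z f) = f"
    unfolding op_spectrum_def Az_def by blast
  define \<epsilon> where "\<epsilon> = 1 / (2 * (\<bar>C\<bar> + 1))"
  have e0: "\<epsilon> > 0" by (simp add: \<epsilon>_def add_pos_nonneg)
  obtain f i0 where f: "finite {i. f i \<noteq> 0}" "f i0 \<noteq> 0" "l2norm (Az U z f) \<le> \<epsilon> * l2norm f"
    using ae e0 unfolding AEfin_def by blast
  have fl2: "f \<in> l2" by (rule finsupp_l2'[OF f(1)])
  have pos: "l2norm f > 0" using l2norm_eq0[OF fl2] f(2) l2norm_nonneg[of f] by force
  have azl2: "Az U z f \<in> l2" by (rule Az_l2[OF cU fl2])
  have "l2norm f = l2norm (B (Az U z f))" using Binv fl2 by simp
  also have "\<dots> \<le> C * l2norm (Az U z f)" using BC azl2 by blast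
  also have "\<dots> \<le> \<bar>C\<bar> * l2norm (Az U z f)" by (rule mult_right_mono) (auto simp: l2norm_nonneg)
  also have "\<dots> \<le> \<bar>C\<bar> * (\<epsilon> * l2norm f)" by (rule mult_left_mono[OF f(3)]) simp
  also have "\<dots> = (\<bar>C\<bar> / (2 * (\<bar>C\<bar> + 1))) * l2norm f" by (simp add: \<epsilon>_def)
  also have "\<dots> \<le> (1/2) * l2norm f"
    by (rule mult_right_mono) (auto simp: l2norm_nonneg field_simps)
  finally show False using pos by simp
qed

lemma bb_ext:
  fixes U :: "('i \<Rightarrow> complex) \<Rightarrow> ('i \<Rightarrow> complex)"
  assumes lU: "linop U" and cU: "contr U" and c: "c \<ge> 0"
    and bb: "\<And>f. finite {i. f i \<noteq> 0} \<Longrightarrow> c * l2norm f \<le> l2norm (Az U z f)"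
    and f: "f \<in> l2"
  shows "c * l2norm f \<le> l2norm (Az U z f)"
proof (rule field_le_epsilon)
  fix e :: real assume e: "e > 0"
  define \<delta> where "\<delta> = e / (c + 1 + cmod z)"
  have d0: "\<delta> > 0" using e c by (simp add: \<delta>_def add_pos_nonneg)
  obtain F where F: "finite F" "l2norm (\<lambda>i. if i \<in> F then 0 else f i) \<le> \<delta>"
    using l2_trunc[OF f d0] by blast
  define t where "t = (\<lambda>i. if i \<in> F then 0 else f i)"
  define g where "g = (\<lambda>i. if i \<in> F then f i else 0)"
  have gfin: "finite {i. g i \<noteq> 0}" using F(1) by (rule rev_finite_subset) (auto simp: g_def)
  have gl2: "g \<in> l2" by (rule finsupp_l2'[OF gfin])
  have tdef: "t = (\<lambda>i. f i - g i)" by (auto simp: t_def g_def)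
  have tl2: "t \<in> l2" unfolding tdef using l2_diff[OF f gl2] by auto
  have tn: "l2norm t \<le> \<delta>" using F(2) by (simp add: t_def)
  have fgt: "f = (\<lambda>i. g i + t i)" by (auto simp: t_def g_def)
  have n1: "l2norm f \<le> l2norm g + l2norm t" using l2_add[OF gl2 tl2] fgt by simp
  have azg: "Az U z g = (\<lambda>i. Az U z f i - Az U z t i)"
    using Az_lin[OF lU, of z 1 f "-1" t] unfolding tdef[symmetric] by (simp add: tdef)
  have azf: "Az U z f \<in> l2" and azt: "Az U z t \<in> l2" "l2norm (Az U z t) \<le> (1 + cmod z) * l2norm t"
    using Az_l2[OF cU f] Az_l2[OF cU tl2] by auto
  have "l2norm (Az U z g) \<le> l2norm (Az U z f) + l2norm (Az U z t)"
    unfolding azg using l2_diff[OF azf azt(1)] by simp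
  moreover have "c * l2norm g \<le> l2norm (Az U z g)" by (rule bb[OF gfin])
  moreover have "c * l2norm f \<le> c * l2norm g + c * l2norm t" using mult_left_mono[OF n1 c] by (simp add: algebra_simps)
  moreover have "c * l2norm t \<le> c * \<delta>" by (rule mult_left_mono[OF tn c])
  moreover have "(1 + cmod z) * l2norm t \<le> (1 + cmod z) * \<delta>" by (rule mult_left_mono[OF tn]) simp
  moreover have "c * \<delta> + (1 + cmod z) * \<delta> = e"
  proof -
    have nz: "c + 1 + cmod z \<noteq> 0" using c norm_ge_zero[of z] by linarith
    have "c * \<delta> + (1 + cmod z) * \<delta> = (c + 1 + cmod z) * \<delta>" by (simp add: algebra_simps)
    also have "\<dots> = e" using nz by (simp add: \<delta>_def)
    finally show ?thesis .
  qed
  ultimately show "c * l2norm f \<le> l2norm (Az U z f) + e" using azt(2) by linarith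
qed

lemma inside_case:
  fixes U V :: "('i \<Rightarrow> complex) \<Rightarrow> ('i \<Rightarrow> complex)"
  assumes gU: "goodlin U" and gV: "goodlin V" and UV: "\<And>f. U (V f) = f" and VU: "\<And>f. V (U f) = f"
    and z: "cmod z < 1"
  shows "z \<notin> op_spectrum U"
proof (cases "z = 0")
  case True
  have "\<exists>B. (\<forall>f\<in>l2. B f \<in> l2) \<and>
      (\<forall>f\<in>l2. \<forall>g\<in>l2. \<forall>a b. B (\<lambda>i. a * f i + b * g i) = (\<lambda>i. a * B f i + b * B g i)) \<and>
      (\<exists>C. \<forall>f\<in>l2. l2norm (B f) \<le> C * l2norm f) \<and>
      (\<forall>f\<in>l2. B (\<lambda>i. U f i - z * f i) = f) \<and>
      (\<forall>f\<in>l2. (\<lambda>i. U (B f) i - z * B f i) = f)"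
    apply (rule exI[of _ V])
    using goodlinD[OF gV] True UV VU unfolding contr_def by (auto simp: linopD intro!: exI[of _ 1])
  then show ?thesis unfolding op_spectrum_def by blast
next
  case False
  define w where "w = 1 / z"
  have w: "cmod w > 1" using z False by (simp add: w_def norm_divide divide_less_eq)
  have wz: "w * z = 1" using False by (simp add: w_def)
  obtain B' where B'l2: "\<forall>f\<in>l2. B' f \<in> l2"
    and B'lin: "\<forall>f\<in>l2. \<forall>g\<in>l2. \<forall>a b. B' (\<lambda>i. a * f i + b * g i) = (\<lambda>i. a * B' f i + b * B' g i)"
    and B'C: "\<exists>C. \<forall>f\<in>l2. l2norm (B' f) \<le> C * l2norm f"
    and B'1: "\<forall>f\<in>l2. B' (\<lambda>i. V f i - w * f i) = f" and B'2: "\<forall>f\<in>l2. (\<lambda>i. V (B' f) i - w * B' f i) = f"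
    using neumann[OF gV w] unfolding op_spectrum_def by blast
  have lU: "linop U" and lV: "linop V" using gU gV goodlinD by auto
  have cU: "contr U" and cV: "contr V" using gU gV goodlinD by auto
  define B where "B g = (\<lambda>i. - w * B' (V g) i)" for g
  have Vl2: "f \<in> l2 \<Longrightarrow> V f \<in> l2" for f using contrD[OF cV] by blast
  have "\<exists>B. (\<forall>f\<in>l2. B f \<in> l2) \<and>
      (\<forall>f\<in>l2. \<forall>g\<in>l2. \<forall>a b. B (\<lambda>i. a * f i + b * g i) = (\<lambda>i. a * B f i + b * B g i)) \<and>
      (\<exists>C. \<forall>f\<in>l2. l2norm (B f) \<le> C * l2norm f) \<and>
      (\<forall>f\<in>l2. B (\<lambda>i. U f i - z * f i) = f) \<and>
      (\<forall>f\<in>l2. (\<lambda>i. U (B f) i - z * B f i) = f)"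
  proof (intro exI[of _ B] conjI ballI allI)
    fix f :: "'i \<Rightarrow> complex" assume f: "f \<in> l2"
    show "B f \<in> l2" unfolding B_def using l2_scale[of "B' (V f)" "- w"] B'l2 Vl2[OF f] by auto
  next
    fix f g :: "'i \<Rightarrow> complex" and a b :: complex assume f: "f \<in> l2" and g: "g \<in> l2"
    show "B (\<lambda>i. a * f i + b * g i) = (\<lambda>i. a * B f i + b * B g i)"
      unfolding B_def linopD[OF lV] using B'lin Vl2[OF f] Vl2[OF g] by (simp add: algebra_simps)
  next
    obtain C where C: "\<forall>f\<in>l2. l2norm (B' f) \<le> C * l2norm f" using B'C by blast
    show "\<exists>C. \<forall>f\<in>(l2::('i \<Rightarrow> complex) set). l2norm (B f) \<le> C * l2norm f"
    proof (intro exI[of _ "cmod w * \<bar>C\<bar>"] ballI)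
      fix f :: "'i \<Rightarrow> complex" assume f: "f \<in> l2"
      have "l2norm (B f) = cmod w * l2norm (B' (V f))"
        unfolding B_def using l2_scale[of "B' (V f)" "- w"] B'l2 Vl2[OF f] by auto
      also have "\<dots> \<le> cmod w * (\<bar>C\<bar> * l2norm (V f))"
      proof (rule mult_left_mono)
        have "l2norm (B' (V f)) \<le> C * l2norm (V f)" using C Vl2[OF f] by blast
        also have "\<dots> \<le> \<bar>C\<bar> * l2norm (V f)" by (rule mult_right_mono[OF abs_ge_self l2norm_nonneg])
        finally show "l2norm (B' (V f)) \<le> \<bar>C\<bar> * l2norm (V f)" .
      qed simp
      also have "\<dots> \<le> cmod w * (\<bar>C\<bar> * l2norm f)"
        using contrD(2)[OF cV f] by (intro mult_left_mono) auto
      finally show "l2norm (B f) \<le> cmod w * \<bar>C\<bar> * l2norm f" by simp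
    qed
  next
    fix f :: "'i \<Rightarrow> complex" assume f: "f \<in> l2"
    have "V (\<lambda>i. U f i - z * f i) = (\<lambda>i. f i - z * V f i)"
      using linopD[OF lV, of 1 "U f" "-z" f] VU by simp
    also have "\<dots> = (\<lambda>i. (- z) * V f i + (w * z) * f i + 0 * f i)" using wz by simp
    also have "\<dots> = (\<lambda>i. (- z) * (\<lambda>i. V f i - w * f i) i + 0 * f i)" by (simp add: algebra_simps)
    finally have e: "V (\<lambda>i. U f i - z * f i) = (\<lambda>i. (- z) * (\<lambda>i. V f i - w * f i) i + 0 * f i)" .
    have vl2: "(\<lambda>i. V f i - w * f i) \<in> l2" using l2_lin[OF Vl2[OF f] f, of 1 "-w"] by simp
    have l: "B' (\<lambda>i. (- z) * (\<lambda>i. V f i - w * f i) i + 0 * f i) = (\<lambda>i. (- z) * B' (\<lambda>i. V f i - w * f i) i + 0 * B' f i)"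
      using B'lin[rule_format, OF vl2 f, of "-z" 0] by simp
    have "B' (\<lambda>i. V f i - w * f i) = f" using B'1 f by blast
    then have l2: "B' (\<lambda>i. (- z) * (\<lambda>i. V f i - w * f i) i + 0 * f i) = (\<lambda>i. (- z) * f i)" using l by simp
    show "B (\<lambda>i. U f i - z * f i) = f"
      unfolding B_def e l2 using wz by (simp add: mult.assoc[symmetric])
  next
    fix g :: "'i \<Rightarrow> complex" assume g: "g \<in> l2"
    define h where "h = B' (V g)"
    have hl2: "h \<in> l2" using B'l2 Vl2[OF g] by (simp add: h_def)
    have hv: "(\<lambda>i. V h i - w * h i) = V g" using B'2 Vl2[OF g] by (simp add: h_def)
    have "U (\<lambda>i. V h i - w * h i) = (\<lambda>i. h i - w * U h i)"
      using linopD[OF lU, of 1 "V h" "-w" h] UV by simp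
    then have "(\<lambda>i. h i - w * U h i) = g" using hv UV by simp
    then have "\<And>i. h i - w * U h i = g i" by meson
    then have "\<And>i. U (\<lambda>i. - w * h i) i - z * (- w * h i) = g i"
      using linop_scale[OF lU, of "-w" h] wz by (simp add: algebra_simps) (metis mult.left_commute mult_1_right)
    then show "(\<lambda>i. U (B g) i - z * B g i) = g" unfolding B_def h_def[symmetric] by auto
  qed
  then show ?thesis unfolding op_spectrum_def by blast
qed


lemma circle_case:
  fixes U :: "('i \<Rightarrow> complex) \<Rightarrow> ('i \<Rightarrow> complex)"
  assumes gU: "goodlin U" and c: "c > 0" and bb: "\<And>f. f \<in> l2 \<Longrightarrow> c * l2norm f \<le> l2norm (Az U z f)"
    and z: "cmod z \<ge> 1"
  shows "z \<notin> op_spectrum U"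
proof -
  have lU: "linop U" and cU: "contr U" and locU: "localop U" using goodlinD[OF gU] by auto
  have z0: "z \<noteq> 0" using z by auto
  define u where "u = z / of_real (cmod z)"
  have u1: "cmod u = 1" using z0 by (simp add: u_def norm_divide)
  have zu: "z = of_real (cmod z) * u" using z0 by (simp add: u_def)
  define d where "d n = c / (2 * (real n + 1))" for n
  have dpos: "d n > 0" for n using c by (simp add: d_def)
  have dle: "d n \<le> c / 2" for n using c by (simp add: d_def divide_le_eq field_simps)
  define w where "w n = z + of_real (d n) * u" for n
  have wz: "cmod (w n - z) = d n" for n using u1 dpos[of n] by (simp add: w_def norm_mult)
  have wgt: "cmod (w n) > 1" for n
  proof -
    have "w n = of_real (cmod z + d n) * u" unfolding w_def by (subst zu) (simp add: algebra_simps)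
    then have "cmod (w n) = \<bar>cmod z + d n\<bar>" using u1 by (simp add: norm_mult del: of_real_add)
    then show ?thesis using z dpos[of n] by simp
  qed
  have wwm: "cmod (w n - w m) = \<bar>d n - d m\<bar>" for n m
  proof -
    have "w n - w m = of_real (d n - d m) * u" by (simp add: w_def algebra_simps)
    then show ?thesis using u1 by (simp add: norm_mult del: of_real_diff)
  qed
  have "\<forall>n. \<exists>B. (\<forall>f\<in>l2. B f \<in> l2) \<and>
      (\<forall>f\<in>l2. \<forall>g\<in>l2. \<forall>a b. B (\<lambda>i. a * f i + b * g i) = (\<lambda>i. a * B f i + b * B g i)) \<and>
      (\<forall>f\<in>l2. B (Az U (w n) f) = f) \<and> (\<forall>f\<in>l2. Az U (w n) (B f) = f)"
    using not_spec_D[OF neumann[OF gU wgt]] by blast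
  then obtain B where BB: "\<forall>n. (\<forall>f\<in>l2. B n f \<in> l2) \<and>
      (\<forall>f\<in>l2. \<forall>g\<in>l2. \<forall>a b. B n (\<lambda>i. a * f i + b * g i) = (\<lambda>i. a * B n f i + b * B n g i)) \<and>
      (\<forall>f\<in>l2. B n (Az U (w n) f) = f) \<and> (\<forall>f\<in>l2. Az U (w n) (B n f) = f)"
    by (rule choice[THEN exE])
  have Bl2: "\<And>n f. f \<in> l2 \<Longrightarrow> B n f \<in> l2" using BB by blast
  have Blin: "\<And>n f g a b. f \<in> l2 \<Longrightarrow> g \<in> l2 \<Longrightarrow> B n (\<lambda>i. a * f i + b * g i) = (\<lambda>i. a * B n f i + b * B n g i)"
    using BB by blast
  have B1: "\<And>n f. f \<in> l2 \<Longrightarrow> B n (Az U (w n) f) = f" using BB by blast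
  have B2: "\<And>n f. f \<in> l2 \<Longrightarrow> Az U (w n) (B n f) = f" using BB by blast
  have Azrel: "Az U z h = (\<lambda>i. 1 * Az U (w n) h i + (w n - z) * h i)" for n h
    by (simp add: Az_def algebra_simps)
  have bbw: "(c / 2) * l2norm h \<le> l2norm (Az U (w n) h)" if h: "h \<in> l2" for n h
  proof -
    have a: "Az U (w n) h \<in> l2" by (rule Az_l2[OF cU h])
    have "c * l2norm h \<le> l2norm (Az U z h)" by (rule bb[OF h])
    also have "\<dots> \<le> cmod 1 * l2norm (Az U (w n) h) + cmod (w n - z) * l2norm h"
      unfolding Azrel[of _ n] using l2_lin[OF a h] by blast
    also have "cmod (w n - z) * l2norm h \<le> (c / 2) * l2norm h"
      unfolding wz by (rule mult_right_mono[OF dle l2norm_nonneg])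
    finally show ?thesis by simp
  qed
  have Bb: "l2norm (B n g) \<le> (2 / c) * l2norm g" if g: "g \<in> l2" for n g
  proof -
    have "(c / 2) * l2norm (B n g) \<le> l2norm g" using bbw[of "B n g" n, OF Bl2[OF g]] B2[OF g, of n] by simp
    then show ?thesis using c by (simp add: field_simps)
  qed
  have Bcau: "cmod (B n g i - B m g i) \<le> (2 / c) * (\<bar>d n - d m\<bar> * ((2 / c) * l2norm g))" if g: "g \<in> l2" for n m g i
  proof -
    define h where "h = (\<lambda>i. 1 * B n g i + (-1) * B m g i)"
    have hl2: "h \<in> l2" unfolding h_def using l2_lin[OF Bl2[OF g] Bl2[OF g]] by blast
    have "Az U (w n) h = (\<lambda>i. 1 * Az U (w n) (B n g) i + (-1) * Az U (w n) (B m g) i)"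
      unfolding h_def by (rule Az_lin[OF lU])
    also have "\<dots> = (\<lambda>i. (w n - w m) * B m g i)"
    proof -
      have "Az U (w n) (B m g) = (\<lambda>i. Az U (w m) (B m g) i - (w n - w m) * B m g i)"
        by (simp add: Az_def algebra_simps)
      then show ?thesis using B2[OF g, of n] B2[OF g, of m] by (simp add: algebra_simps)
    qed
    finally have e: "Az U (w n) h = (\<lambda>i. (w n - w m) * B m g i)" .
    have "(c / 2) * l2norm h \<le> l2norm (\<lambda>i. (w n - w m) * B m g i)" using bbw[of h n, OF hl2] e by simp
    also have "\<dots> = \<bar>d n - d m\<bar> * l2norm (B m g)" using l2_scale[OF Bl2[OF g], of "w n - w m" m] wwm by simp
    also have "\<dots> \<le> \<bar>d n - d m\<bar> * ((2 / c) * l2norm g)" by (rule mult_left_mono[OF Bb[OF g]]) simp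
    finally have "l2norm h \<le> (2 / c) * (\<bar>d n - d m\<bar> * ((2 / c) * l2norm g))" using c by (simp add: field_simps)
    moreover have "cmod (h i) \<le> l2norm h" by (rule l2_pt[OF hl2])
    ultimately show ?thesis by (simp add: h_def)
  qed
  have dmono: "\<bar>d n - d m\<bar> \<le> d N" if "n \<ge> N" "m \<ge> N" for n m N
  proof -
    have "d n \<le> d N" "d m \<le> d N" using that c by (auto simp: d_def intro!: divide_left_mono mult_pos_pos)
    then show ?thesis using dpos[of n] dpos[of m] by linarith
  qed
  have Bconv: "convergent (\<lambda>n. B n g i)" if g: "g \<in> l2" for g i
  proof -
    have "Cauchy (\<lambda>n. B n g i)"
    proof (rule CauchyI)
      fix e :: real assume e: "e > 0"
      define K where "K = (2 / c) * ((2 / c) * l2norm g)"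
      obtain N where N: "K * (c / 2) < real N * e" using reals_Archimedean3[OF e] by blast
      have K0: "K \<ge> 0" using c by (simp add: K_def l2norm_nonneg)
      show "\<exists>M. \<forall>m\<ge>M. \<forall>n\<ge>M. norm (B m g i - B n g i) < e"
      proof (intro exI allI impI)
        fix m n assume mn: "m \<ge> N" "n \<ge> N"
        have "norm (B m g i - B n g i) \<le> K * \<bar>d m - d n\<bar>" using Bcau[where n=m and m=n and g=g and i=i, OF g] by (simp add: K_def algebra_simps)
        also have "\<dots> \<le> K * d N" by (rule mult_left_mono[OF dmono[OF mn] K0])
        also have "K * d N = K * (c / 2) / (real N + 1)" by (simp add: d_def)
        also have "\<dots> < e"
        proof -
          have "K * (c / 2) < (real N + 1) * e" using N e by (simp add: algebra_simps)
          then show ?thesis by (simp add: divide_less_eq algebra_simps add_pos_nonneg)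
        qed
        finally show "norm (B m g i - B n g i) < e" .
      qed
    qed
    then show ?thesis by (rule Cauchy_convergent)
  qed
  have d0: "(\<lambda>n. d n) \<longlonglongrightarrow> 0"
  proof -
    have e: "d = (\<lambda>n. (c / 2) * inverse (real (Suc n)))" by (rule ext) (simp add: d_def field_simps)
    have "(\<lambda>n. (c / 2) * inverse (real (Suc n))) \<longlonglongrightarrow> (c / 2) * 0"
      by (intro tendsto_mult tendsto_const LIMSEQ_inverse_real_of_nat)
    then show ?thesis unfolding e by simp
  qed
  have small: "(\<lambda>n. (w n - z) * B n g i) \<longlonglongrightarrow> 0" if g: "g \<in> l2" for g i
  proof (rule Lim_null_comparison)
    show "\<forall>\<^sub>F n in sequentially. norm ((w n - z) * B n g i) \<le> d n * ((2 / c) * l2norm g)"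
    proof (intro always_eventually allI)
      fix n
      have "norm ((w n - z) * B n g i) = d n * cmod (B n g i)" by (simp add: norm_mult wz)
      also have "\<dots> \<le> d n * ((2 / c) * l2norm g)"
        using l2_pt[OF Bl2[OF g], of n i] Bb[OF g, of n] dpos[of n] by (intro mult_left_mono) auto
      finally show "norm ((w n - z) * B n g i) \<le> d n * ((2 / c) * l2norm g)" .
    qed
    show "(\<lambda>n. d n * ((2 / c) * l2norm g)) \<longlonglongrightarrow> 0"
      using tendsto_mult_right[OF d0, of "(2 / c) * l2norm g"] by simp
  qed
  show ?thesis
  proof (rule PL[OF lU cU locU, of "2 / c"])
    show "0 \<le> 2 / c" using c by simp
    show "\<And>n g. g \<in> l2 \<Longrightarrow> B n g \<in> l2 \<and> l2norm (B n g) \<le> 2 / c * l2norm g" using Bl2 Bb by blast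
    show "\<And>n f g a b. f \<in> l2 \<Longrightarrow> g \<in> l2 \<Longrightarrow> B n (\<lambda>i. a * f i + b * g i) = (\<lambda>i. a * B n f i + b * B n g i)"
      by (rule Blin)
    show "\<And>g i. g \<in> l2 \<Longrightarrow> convergent (\<lambda>n. B n g i)" by (rule Bconv)
    show "(\<lambda>n. Az U z (B n g) i) \<longlonglongrightarrow> g i" if g: "g \<in> l2" for g i
    proof -
      have "Az U z (B n g) i = g i + (w n - z) * B n g i" for n
        using Azrel[of "B n g" n] B2[OF g, of n] by simp
      then show ?thesis using tendsto_add[OF tendsto_const[of "g i"] small[OF g, of i]] by simp
    qed
    show "(\<lambda>n. B n (Az U z f) i) \<longlonglongrightarrow> f i" if f: "f \<in> l2" for f i
    proof -
      have "B n (Az U z f) i = f i + (w n - z) * B n f i" for n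
        using Azrel[of f n] Blin[where n=n and a=1 and b="w n - z", OF Az_l2(1)[where z="w n", OF cU f] f] B1[OF f, of n] by simp
      then show ?thesis using tendsto_add[OF tendsto_const[of "f i"] small[OF f, of i]] by simp
    qed
  qed
qed

theorem spec_char:
  fixes U V :: "('i \<Rightarrow> complex) \<Rightarrow> ('i \<Rightarrow> complex)"
  assumes gU: "goodlin U" and gV: "goodlin V" and UV: "\<And>f. U (V f) = f" and VU: "\<And>f. V (U f) = f"
  shows "z \<in> op_spectrum U \<longleftrightarrow> AEfin U z"
proof
  assume "AEfin U z" then show "z \<in> op_spectrum U" by (rule spec_if_AE[OF goodlinD(2)[OF gU]])
next
  assume sp: "z \<in> op_spectrum U"
  show "AEfin U z"
  proof (rule ccontr)
    assume "\<not> AEfin U z"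
    then obtain \<epsilon> where e: "\<epsilon> > 0" and
      ne: "\<And>f. finite {i. f i \<noteq> 0} \<Longrightarrow> (\<exists>i. f i \<noteq> 0) \<Longrightarrow> \<epsilon> * l2norm f < l2norm (Az U z f)"
      unfolding AEfin_def by (auto simp: not_le)
    have bbf: "\<epsilon> * l2norm f \<le> l2norm (Az U z f)" if "finite {i. f i \<noteq> 0}" for f
    proof (cases "\<exists>i. f i \<noteq> 0")
      case True then show ?thesis using ne[OF that] by simp
    next
      case False
      then have "f = (\<lambda>i. 0)" by auto
      have "l2norm (\<lambda>i::'i. 0::complex) = 0" by (rule l2_zero(2))
      then show ?thesis using linop_zero[OF goodlinD(1)[OF gU]] \<open>f = (\<lambda>i. 0)\<close> by (simp add: Az_def)
    qed
    have bb: "\<epsilon> * l2norm f \<le> l2norm (Az U z f)" if "f \<in> l2" for f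
      by (rule bb_ext[OF goodlinD(1,2)[OF gU] _ bbf that]) (use e in simp)
    consider "cmod z > 1" | "cmod z < 1" | "cmod z = 1" by linarith
    then show False
    proof cases
      case 1 then show False using neumann[OF gU] sp by blast
    next
      case 2 then show False using inside_case[OF gU gV UV VU] sp by blast
    next
      case 3 then show False using circle_case[OF gU e bb] sp by simp
    qed
  qed
qed


lemma UNIV_spin: "(UNIV :: spin set) = {Up, Down}"
  using spin.exhaust by auto

lemma finite_spin[simp]: "finite (UNIV :: spin set)"
  by (simp add: UNIV_spin)

definition wperm :: "('i \<Rightarrow> complex) \<Rightarrow> ('i \<Rightarrow> 'i) \<Rightarrow> ('i \<Rightarrow> complex) \<Rightarrow> ('i \<Rightarrow> complex)" where
  "wperm w \<pi> \<psi> = (\<lambda>i. w i * \<psi> (\<pi> i))"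

lemma goodlin_wperm:
  assumes "inj \<pi>" "\<And>i. cmod (w i) \<le> 1"
  shows "goodlin (wperm w \<pi>)"
  unfolding goodlin_def
proof (intro conjI)
  show "linop (wperm w \<pi>)" unfolding linop_def wperm_def by (simp add: algebra_simps)
  show "localop (wperm w \<pi>)" unfolding localop_def wperm_def by (auto intro!: tendsto_intros)
  show "contr (wperm w \<pi>)" unfolding contr_def
  proof (intro ballI)
    fix f :: "'a \<Rightarrow> complex" assume f: "f \<in> l2"
    show "wperm w \<pi> f \<in> l2 \<and> l2norm (wperm w \<pi> f) \<le> l2norm f"
    proof (rule l2_from_bound)
      fix F :: "'a set" assume F: "finite F"
      have "(\<Sum>i\<in>F. (cmod (wperm w \<pi> f i))\<^sup>2) \<le> (\<Sum>i\<in>F. (cmod (f (\<pi> i)))\<^sup>2)"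
      proof (rule sum_mono)
        fix i
        have "cmod (w i * f (\<pi> i)) \<le> cmod (f (\<pi> i))"
          using mult_right_mono[OF assms(2)[of i] norm_ge_zero[of "f (\<pi> i)"]] by (simp add: norm_mult)
        then show "(cmod (wperm w \<pi> f i))\<^sup>2 \<le> (cmod (f (\<pi> i)))\<^sup>2" unfolding wperm_def by (simp add: power_mono)
      qed
      also have "\<dots> = (\<Sum>j\<in>\<pi> ` F. (cmod (f j))\<^sup>2)"
        using sum.reindex[of \<pi> F "\<lambda>j. (cmod (f j))\<^sup>2"] assms(1) by (simp add: inj_on_def inj_def)
      also have "\<dots> \<le> (l2norm f)\<^sup>2" by (rule l2_sum_le[OF f]) (use F in simp)
      finally show "(\<Sum>i\<in>F. (cmod (wperm w \<pi> f i))\<^sup>2) \<le> (l2norm f)\<^sup>2" .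
    qed (rule l2norm_nonneg)
  qed
qed

definition coin2 :: "('x \<Rightarrow> complex) \<Rightarrow> ('x \<Rightarrow> complex) \<Rightarrow> ('x \<Rightarrow> complex) \<Rightarrow> ('x \<Rightarrow> complex)
    \<Rightarrow> ('x \<times> spin \<Rightarrow> complex) \<Rightarrow> ('x \<times> spin \<Rightarrow> complex)" where
  "coin2 a b c d \<psi> = (\<lambda>(x, s). if s = Up then a x * \<psi> (x, Up) + b x * \<psi> (x, Down)
                                else c x * \<psi> (x, Up) + d x * \<psi> (x, Down))"

lemma sum_spin: "(\<Sum>s\<in>(UNIV::spin set). g s) = g Up + g Down"
  by (simp add: UNIV_spin)

lemma sum_XU: "(\<Sum>i\<in>X \<times> UNIV. h i) = (\<Sum>x\<in>X. h (x, Up) + h (x, Down))"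
proof -
  have "(\<Sum>i\<in>X \<times> UNIV. h i) = (\<Sum>(x, s)\<in>X \<times> UNIV. h (x, s))" by simp
  also have "\<dots> = (\<Sum>x\<in>X. \<Sum>s\<in>UNIV. h (x, s))" by (rule sum.cartesian_product[symmetric])
  finally show ?thesis by (simp add: sum_spin)
qed

lemma goodlin_coin2:
  assumes un: "\<And>x u v. (cmod (a x * u + b x * v))\<^sup>2 + (cmod (c x * u + d x * v))\<^sup>2 \<le> (cmod u)\<^sup>2 + (cmod v)\<^sup>2"
  shows "goodlin (coin2 a b c d)"
  unfolding goodlin_def
proof (intro conjI)
  show "linop (coin2 a b c d)" unfolding linop_def coin2_def by (auto simp: algebra_simps)
  show "localop (coin2 a b c d)" unfolding localop_def coin2_def by (auto intro!: tendsto_intros)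
  show "contr (coin2 a b c d)" unfolding contr_def
  proof (intro ballI)
    fix f :: "'a \<times> spin \<Rightarrow> complex" assume f: "f \<in> l2"
    show "coin2 a b c d f \<in> l2 \<and> l2norm (coin2 a b c d f) \<le> l2norm f"
    proof (rule l2_from_bound)
      fix F :: "('a \<times> spin) set" assume F: "finite F"
      define X where "X = fst ` F"
      have X: "finite X" using F by (simp add: X_def)
      have FX: "F \<subseteq> X \<times> UNIV" by (force simp: X_def)
      have "(\<Sum>i\<in>F. (cmod (coin2 a b c d f i))\<^sup>2) \<le> (\<Sum>i\<in>X \<times> UNIV. (cmod (coin2 a b c d f i))\<^sup>2)"
        by (rule sum_mono2) (use X FX in auto)
      also have "\<dots> = (\<Sum>x\<in>X. (cmod (a x * f (x, Up) + b x * f (x, Down)))\<^sup>2 + (cmod (c x * f (x, Up) + d x * f (x, Down)))\<^sup>2)"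
        by (simp add: sum_XU coin2_def)
      also have "\<dots> \<le> (\<Sum>x\<in>X. (cmod (f (x, Up)))\<^sup>2 + (cmod (f (x, Down)))\<^sup>2)"
        by (rule sum_mono) (rule un)
      also have "\<dots> = (\<Sum>i\<in>X \<times> UNIV. (cmod (f i))\<^sup>2)"
        by (simp add: sum_XU)
      also have "\<dots> \<le> (l2norm f)\<^sup>2" by (rule l2_sum_le[OF f]) (use X in simp)
      finally show "(\<Sum>i\<in>F. (cmod (coin2 a b c d f i))\<^sup>2) \<le> (l2norm f)\<^sup>2" .
    qed (rule l2norm_nonneg)
  qed
qed


lemma spin_not_Up[simp]: "(s \<noteq> Up) = (s = Down)"
  by (cases s) auto

lemma diagTT_wperm:
  assumes "\<And>g. T g = (\<lambda>x. a x * g (p x))" "\<And>g. T' g = (\<lambda>x. b x * g (q x))"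
  shows "diagTT T T' = wperm (\<lambda>(x, s). if s = Up then a x else b x) (\<lambda>(x, s). if s = Up then (p x, Up) else (q x, Down))"
  by (rule ext, rule ext) (auto simp: diagTT_def wperm_def assms split: prod.splits)

lemma goodlin_diagTT:
  assumes "\<And>g. T g = (\<lambda>x. a x * g (p x))" "\<And>g. T' g = (\<lambda>x. b x * g (q x))"
    and "inj p" "inj q" "\<And>x. cmod (a x) \<le> 1" "\<And>x. cmod (b x) \<le> 1"
  shows "goodlin (diagTT T T')"
  unfolding diagTT_wperm[OF assms(1,2)]
proof (rule goodlin_wperm)
  show "inj (\<lambda>(x, s). if s = Up then (p x, Up) else (q x, Down))"
  proof (rule injI)
    fix u v :: "'a \<times> spin"
    assume e: "(\<lambda>(x, s). if s = Up then (p x, Up) else (q x, Down)) u = (\<lambda>(x, s). if s = Up then (p x, Up) else (q x, Down)) v"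
    obtain x s y t where u: "u = (x, s)" and v: "v = (y, t)" by fastforce
    show "u = v"
    proof (cases s; cases t)
      assume "s = Up" "t = Up" then show ?thesis using e inj_eq[OF assms(3)] u v by simp
    next
      assume "s = Up" "t = Down" then show ?thesis using e u v by simp
    next
      assume "s = Down" "t = Up" then show ?thesis using e u v by simp
    next
      assume "s = Down" "t = Down" then show ?thesis using e inj_eq[OF assms(4)] u v by simp
    qed
  qed
  show "\<And>i. cmod ((\<lambda>(x, s). if s = Up then a x else b x) i) \<le> 1"
    using assms(5,6) by (auto split: prod.splits)
qed

lemma diagTT_inv:
  assumes "\<And>g. A (T g) = g" "\<And>g. A' (T' g) = g"
  shows "diagTT A A' (diagTT T T' f) = f"
proof -
  have h1: "(\<lambda>y. diagTT T T' f (y, Up)) = T (\<lambda>y. f (y, Up))" by (simp add: diagTT_def)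
  have h2: "(\<lambda>y. diagTT T T' f (y, Down)) = T' (\<lambda>y. f (y, Down))" by (simp add: diagTT_def)
  show ?thesis
  proof (rule ext)
    fix i :: "'a \<times> spin"
    obtain x s where i: "i = (x, s)" by fastforce
    show "diagTT A A' (diagTT T T' f) i = f i"
    proof (cases s)
      case Up
      then show ?thesis unfolding i diagTT_def[of A A'] using h1 assms(1) by simp
    next
      case Down
      then show ?thesis unfolding i diagTT_def[of A A'] using h2 assms(2) by simp
    qed
  qed
qed

lemma T1_form: "T1 \<Phi> g = (\<lambda>x. cis (- (of_int (snd x) * \<Phi> / 2)) * g ((\<lambda>x. (fst x - 1, snd x)) x))"
  by (auto simp: T1_def)
lemma T1adj_form: "T1adj \<Phi> g = (\<lambda>x. cis (of_int (snd x) * \<Phi> / 2) * g ((\<lambda>x. (fst x + 1, snd x)) x))"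
  by (auto simp: T1adj_def)
lemma T2_form: "T2 \<Phi> g = (\<lambda>x. cis (of_int (fst x) * \<Phi> / 2) * g ((\<lambda>x. (fst x, snd x - 1)) x))"
  by (auto simp: T2_def)
lemma T2adj_form: "T2adj \<Phi> g = (\<lambda>x. cis (- (of_int (fst x) * \<Phi> / 2)) * g ((\<lambda>x. (fst x, snd x + 1)) x))"
  by (auto simp: T2adj_def)

lemma inj_shifts:
  "inj (\<lambda>x::int \<times> int. (fst x - 1, snd x))" "inj (\<lambda>x::int \<times> int. (fst x + 1, snd x))"
  "inj (\<lambda>x::int \<times> int. (fst x, snd x - 1))" "inj (\<lambda>x::int \<times> int. (fst x, snd x + 1))"
  by (auto simp: inj_def prod_eq_iff)

lemma goodlin_D1: "goodlin (diagTT (T1 \<Phi>) (T1adj \<Phi>))"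
  by (rule goodlin_diagTT[OF T1_form T1adj_form inj_shifts(1,2)]) simp_all
lemma goodlin_D1i: "goodlin (diagTT (T1adj \<Phi>) (T1 \<Phi>))"
  by (rule goodlin_diagTT[OF T1adj_form T1_form inj_shifts(2,1)]) simp_all
lemma goodlin_D2: "goodlin (diagTT (T2 \<Phi>) (T2adj \<Phi>))"
  by (rule goodlin_diagTT[OF T2_form T2adj_form inj_shifts(3,4)]) simp_all
lemma goodlin_D2i: "goodlin (diagTT (T2adj \<Phi>) (T2 \<Phi>))"
  by (rule goodlin_diagTT[OF T2adj_form T2_form inj_shifts(4,3)]) simp_all
lemmas goodlin_D = goodlin_D1 goodlin_D1i goodlin_D2 goodlin_D2i

lemma T_inv:
  "T1adj \<Phi> (T1 \<Phi> g) = g" "T1 \<Phi> (T1adj \<Phi> g) = g" "T2adj \<Phi> (T2 \<Phi> g) = g" "T2 \<Phi> (T2adj \<Phi> g) = g"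
  by (rule ext; auto simp: T1_def T1adj_def T2_def T2adj_def mult.assoc[symmetric] cis_mult)+

definition rH :: complex where "rH = 1 / of_real (sqrt 2)"

lemma coinH_coin2: "coinH = coin2 (\<lambda>_. rH) (\<lambda>_. rH) (\<lambda>_. rH) (\<lambda>_. - rH)"
proof (rule ext, rule ext)
  fix \<psi> :: "'a \<times> spin \<Rightarrow> complex" and i :: "'a \<times> spin"
  obtain x s where i: "i = (x, s)" by fastforce
  have a: "(u + v) / of_real (sqrt 2) = rH * u + rH * v" for u v :: complex
    by (simp add: rH_def add_divide_distrib)
  have b: "(u - v) / of_real (sqrt 2) = rH * u + - rH * v" for u v :: complex
    by (simp add: rH_def diff_divide_distrib)
  show "coinH \<psi> i = coin2 (\<lambda>_. rH) (\<lambda>_. rH) (\<lambda>_. rH) (\<lambda>_. - rH) \<psi> i"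
    unfolding i coinH_def coin2_def by (simp only: a b prod.case)
qed

lemma rH_sq: "rH * rH = 1 / 2"
proof -
  have "of_real (sqrt 2) * of_real (sqrt 2) = (of_real (sqrt 2 * sqrt 2) :: complex)" by (rule of_real_mult[symmetric])
  also have "sqrt 2 * sqrt 2 = 2" by simp
  finally have "of_real (sqrt 2) * of_real (sqrt 2) = (2::complex)" by simp
  then show ?thesis by (simp add: rH_def)
qed

lemma cmod_rH_sq: "(cmod rH)\<^sup>2 = 1 / 2"
  by (simp add: rH_def norm_divide power_divide)

lemma coinH_inv: fixes f :: "'x \<times> spin \<Rightarrow> complex" shows "coinH (coinH f) = f"
proof (rule ext)
  fix i :: "'x \<times> spin"
  obtain x s where i: "i = (x, s)" by fastforce
  have e1: "rH * (rH * u + rH * v) + rH * (rH * u - rH * v) = u" for u v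
  proof -
    have "rH * (rH * u + rH * v) + rH * (rH * u - rH * v) = 2 * (rH * rH) * u" by (simp add: algebra_simps)
    then show ?thesis by (simp add: rH_sq)
  qed
  have e2: "rH * (rH * u + rH * v) - rH * (rH * u - rH * v) = v" for u v
  proof -
    have "rH * (rH * u + rH * v) - rH * (rH * u - rH * v) = 2 * (rH * rH) * v" by (simp add: algebra_simps)
    then show ?thesis by (simp add: rH_sq)
  qed
  show "coinH (coinH f) i = f i"
    unfolding coinH_coin2 i by (cases s) (simp_all add: coin2_def e1 e2)
qed

lemma cmod_sq_add_sub: "(cmod (u + v))\<^sup>2 + (cmod (u - v))\<^sup>2 = 2 * ((cmod u)\<^sup>2 + (cmod v)\<^sup>2)"
  unfolding cmod_power2 by (simp add: power2_eq_square algebra_simps)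

lemma goodlin_coinH: "goodlin coinH"
  unfolding coinH_coin2
proof (rule goodlin_coin2)
  fix x :: 'a and u v :: complex
  have n1: "cmod (rH * u + rH * v) = cmod rH * cmod (u + v)" by (simp add: norm_mult[symmetric] distrib_left)
  have n2: "cmod (rH * u + - rH * v) = cmod rH * cmod (u - v)" by (simp add: norm_mult[symmetric] right_diff_distrib)
  have "(cmod (rH * u + rH * v))\<^sup>2 + (cmod (rH * u + - rH * v))\<^sup>2 = (cmod rH)\<^sup>2 * ((cmod (u + v))\<^sup>2 + (cmod (u - v))\<^sup>2)"
    unfolding n1 n2 by (simp add: power_mult_distrib algebra_simps)
  also have "\<dots> = (cmod u)\<^sup>2 + (cmod v)\<^sup>2" by (simp add: cmod_sq_add_sub cmod_rH_sq)
  finally show "(cmod (rH * u + rH * v))\<^sup>2 + (cmod (rH * u + - rH * v))\<^sup>2 \<le> (cmod u)\<^sup>2 + (cmod v)\<^sup>2" by simp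
qed

definition magWinv :: "real \<Rightarrow> ((int \<times> int) \<times> spin \<Rightarrow> complex) \<Rightarrow> ((int \<times> int) \<times> spin \<Rightarrow> complex)" where
  "magWinv \<Phi> = coinH \<circ> diagTT (T2adj \<Phi>) (T2 \<Phi>) \<circ> coinH \<circ> diagTT (T1adj \<Phi>) (T1 \<Phi>)"

lemma goodlin_magW: "goodlin (magW \<Phi>)" "goodlin (magWinv \<Phi>)"
  unfolding magW_def magWinv_def
  by (intro goodlin_comp goodlin_D goodlin_coinH)+

lemma magW_inv: "magW \<Phi> (magWinv \<Phi> f) = f" "magWinv \<Phi> (magW \<Phi> f) = f"
  unfolding magW_def magWinv_def
  by (simp_all add: diagTT_inv T_inv coinH_inv)


definition shiftInv :: "(int \<times> spin \<Rightarrow> complex) \<Rightarrow> (int \<times> spin \<Rightarrow> complex)" where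
  "shiftInv \<psi> = (\<lambda>(y, s). \<psi> (y + spin_val s, s))"

lemma shiftS_wperm: "shiftS = wperm (\<lambda>_. 1) (\<lambda>(y, s). (y - spin_val s, s))"
  by (rule ext, rule ext) (auto simp: shiftS_def wperm_def split: prod.splits)

lemma shiftInv_wperm: "shiftInv = wperm (\<lambda>_. 1) (\<lambda>(y, s). (y + spin_val s, s))"
  by (rule ext, rule ext) (auto simp: shiftInv_def wperm_def split: prod.splits)

lemma goodlin_shift: "goodlin shiftS" "goodlin shiftInv"
  unfolding shiftS_wperm shiftInv_wperm
  by (rule goodlin_wperm, auto simp: inj_def)+

lemma shift_inv: "shiftS (shiftInv f) = f" "shiftInv (shiftS f) = f"
  by (rule ext; auto simp: shiftS_def shiftInv_def split: prod.splits)+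

definition ang :: "real \<Rightarrow> real \<Rightarrow> int \<Rightarrow> real" where
  "ang \<Phi> \<theta> x = \<Phi> * of_int x + \<theta>"

lemma coinRot_coin2: "coinRot \<Phi> \<theta> = coin2 (\<lambda>x. of_real (cos (ang \<Phi> \<theta> x))) (\<lambda>x. - of_real (sin (ang \<Phi> \<theta> x)))
   (\<lambda>x. of_real (sin (ang \<Phi> \<theta> x))) (\<lambda>x. of_real (cos (ang \<Phi> \<theta> x)))"
  by (rule ext, rule ext) (auto simp: coinRot_def coin2_def ang_def Let_def split: prod.splits)

definition coinRotInv :: "real \<Rightarrow> real \<Rightarrow> (int \<times> spin \<Rightarrow> complex) \<Rightarrow> (int \<times> spin \<Rightarrow> complex)" where
  "coinRotInv \<Phi> \<theta> = coin2 (\<lambda>x. of_real (cos (ang \<Phi> \<theta> x))) (\<lambda>x. of_real (sin (ang \<Phi> \<theta> x)))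
   (\<lambda>x. - of_real (sin (ang \<Phi> \<theta> x))) (\<lambda>x. of_real (cos (ang \<Phi> \<theta> x)))"

lemma rot_unitary:
  fixes c s :: real and u v :: complex
  assumes "s\<^sup>2 + c\<^sup>2 = 1"
  shows "(cmod (of_real c * u + - of_real s * v))\<^sup>2 + (cmod (of_real s * u + of_real c * v))\<^sup>2 \<le> (cmod u)\<^sup>2 + (cmod v)\<^sup>2"
    and "(cmod (of_real c * u + of_real s * v))\<^sup>2 + (cmod (- of_real s * u + of_real c * v))\<^sup>2 \<le> (cmod u)\<^sup>2 + (cmod v)\<^sup>2"
proof -
  have "(cmod (of_real c * u + - of_real s * v))\<^sup>2 + (cmod (of_real s * u + of_real c * v))\<^sup>2 = (s\<^sup>2 + c\<^sup>2) * ((cmod u)\<^sup>2 + (cmod v)\<^sup>2)"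
    unfolding cmod_power2 by (simp add: power2_eq_square algebra_simps)
  then show "(cmod (of_real c * u + - of_real s * v))\<^sup>2 + (cmod (of_real s * u + of_real c * v))\<^sup>2 \<le> (cmod u)\<^sup>2 + (cmod v)\<^sup>2"
    using assms by simp
  have "(cmod (of_real c * u + of_real s * v))\<^sup>2 + (cmod (- of_real s * u + of_real c * v))\<^sup>2 = (s\<^sup>2 + c\<^sup>2) * ((cmod u)\<^sup>2 + (cmod v)\<^sup>2)"
    unfolding cmod_power2 by (simp add: power2_eq_square algebra_simps)
  then show "(cmod (of_real c * u + of_real s * v))\<^sup>2 + (cmod (- of_real s * u + of_real c * v))\<^sup>2 \<le> (cmod u)\<^sup>2 + (cmod v)\<^sup>2"
    using assms by simp
qed

lemma goodlin_coinRot1: "goodlin (coinRot \<Phi> \<theta>)"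
  unfolding coinRot_coin2 by (rule goodlin_coin2, rule rot_unitary(1)) simp

lemma goodlin_coinRot2: "goodlin (coinRotInv \<Phi> \<theta>)"
  unfolding coinRotInv_def by (rule goodlin_coin2, rule rot_unitary(2)) simp

lemma sc_c: "of_real (sin a) * of_real (sin a) + of_real (cos a) * of_real (cos a) = (1::complex)"
proof -
  have "(sin a)\<^sup>2 + (cos a)\<^sup>2 = 1" by (rule sin_cos_squared_add)
  then have "of_real ((sin a)\<^sup>2 + (cos a)\<^sup>2) = (1::complex)" by simp
  then show ?thesis by (simp add: power2_eq_square)
qed

lemma rot_inv_eqs:
  fixes a :: real and u v :: complex
  defines "c \<equiv> (of_real (cos a) :: complex)" and "s \<equiv> (of_real (sin a) :: complex)"
  shows "c * (c * u + - s * v) + s * (s * u + c * v) = u"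
    "- s * (c * u + - s * v) + c * (s * u + c * v) = v"
    "c * (c * u + s * v) + - s * (- s * u + c * v) = u"
    "s * (c * u + s * v) + c * (- s * u + c * v) = v"
proof -
  have sc: "s * s + c * c = 1" unfolding s_def c_def by (rule sc_c)
  have "c * (c * u + - s * v) + s * (s * u + c * v) = (s * s + c * c) * u" by algebra
  then show "c * (c * u + - s * v) + s * (s * u + c * v) = u" using sc by simp
  have "- s * (c * u + - s * v) + c * (s * u + c * v) = (s * s + c * c) * v" by algebra
  then show "- s * (c * u + - s * v) + c * (s * u + c * v) = v" using sc by simp
  have "c * (c * u + s * v) + - s * (- s * u + c * v) = (s * s + c * c) * u" by algebra
  then show "c * (c * u + s * v) + - s * (- s * u + c * v) = u" using sc by simp
  have "s * (c * u + s * v) + c * (- s * u + c * v) = (s * s + c * c) * v" by algebra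
  then show "s * (c * u + s * v) + c * (- s * u + c * v) = v" using sc by simp
qed

lemma coin2_comp:
  "coin2 a' b' c' d' (coin2 a b c d f) = coin2 (\<lambda>x. a' x * a x + b' x * c x) (\<lambda>x. a' x * b x + b' x * d x)
     (\<lambda>x. c' x * a x + d' x * c x) (\<lambda>x. c' x * b x + d' x * d x) f"
  by (rule ext) (auto simp: coin2_def algebra_simps split: prod.splits)

lemma coin2_id: "(\<And>x. a x = 1) \<Longrightarrow> (\<And>x. b x = 0) \<Longrightarrow> (\<And>x. c x = 0) \<Longrightarrow> (\<And>x. d x = 1) \<Longrightarrow> coin2 a b c d f = f"
  by (rule ext) (auto simp: coin2_def split: prod.splits)

lemma coinRot_inv: "coinRotInv \<Phi> \<theta> (coinRot \<Phi> \<theta> f) = f" "coinRot \<Phi> \<theta> (coinRotInv \<Phi> \<theta> f) = f"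
proof -
  have sc: "of_real (sin a) * of_real (sin a) + of_real (cos a) * of_real (cos a) = (1::complex)" for a
    by (rule sc_c)
  have sc2: "of_real (cos a) * of_real (cos a) + of_real (sin a) * of_real (sin a) = (1::complex)" for a
    using sc_c[of a] by (simp add: add.commute)
  note sc = sc sc2
  show "coinRotInv \<Phi> \<theta> (coinRot \<Phi> \<theta> f) = f"
    unfolding coinRot_coin2 coinRotInv_def coin2_comp
    by (rule coin2_id) (simp_all add: sc algebra_simps)
  show "coinRot \<Phi> \<theta> (coinRotInv \<Phi> \<theta> f) = f"
    unfolding coinRot_coin2 coinRotInv_def coin2_comp
    by (rule coin2_id) (simp_all add: sc algebra_simps)
qed

definition uamoWinv :: "real \<Rightarrow> real \<Rightarrow> (int \<times> spin \<Rightarrow> complex) \<Rightarrow> (int \<times> spin \<Rightarrow> complex)" where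
  "uamoWinv \<Phi> \<theta> = coinRotInv \<Phi> \<theta> \<circ> shiftInv"

lemma goodlin_uamoW: "goodlin (uamoW \<Phi> \<theta>)" "goodlin (uamoWinv \<Phi> \<theta>)"
  unfolding uamoW_def uamoWinv_def
  by (rule goodlin_comp goodlin_shift goodlin_coinRot1 goodlin_coinRot2)+

lemma uamoW_inv: "uamoW \<Phi> \<theta> (uamoWinv \<Phi> \<theta> f) = f" "uamoWinv \<Phi> \<theta> (uamoW \<Phi> \<theta> f) = f"
  unfolding uamoW_def uamoWinv_def by (simp_all add: coinRot_inv shift_inv)


definition Aop :: "real \<Rightarrow> (int \<times> spin \<Rightarrow> complex) \<Rightarrow> (int \<times> spin \<Rightarrow> complex)" where
  "Aop \<Phi> g = (\<lambda>(y, s). if s = Up then (1/2) * cis (of_int (y - 1) * \<Phi>) * (g (y - 1, Up) + \<i> * g (y - 1, Down))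
      else (- \<i> / 2) * cis (of_int (y + 1) * \<Phi>) * (g (y + 1, Up) + \<i> * g (y + 1, Down)))"

definition Bop :: "real \<Rightarrow> (int \<times> spin \<Rightarrow> complex) \<Rightarrow> (int \<times> spin \<Rightarrow> complex)" where
  "Bop \<Phi> g = (\<lambda>(y, s). if s = Up then (1/2) * cis (- (of_int (y - 1) * \<Phi>)) * (g (y - 1, Up) - \<i> * g (y - 1, Down))
      else (\<i> / 2) * cis (- (of_int (y + 1) * \<Phi>)) * (g (y + 1, Up) - \<i> * g (y + 1, Down)))"

definition row :: "((int \<times> int) \<times> spin \<Rightarrow> complex) \<Rightarrow> int \<Rightarrow> (int \<times> spin \<Rightarrow> complex)" where
  "row \<rho> x2 = (\<lambda>(x1, s). \<rho> ((x1, x2), s))"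

definition Mop :: "real \<Rightarrow> ((int \<times> int) \<times> spin \<Rightarrow> complex) \<Rightarrow> ((int \<times> int) \<times> spin \<Rightarrow> complex)" where
  "Mop \<Phi> \<rho> = (\<lambda>((y1, y2), s). Aop \<Phi> (row \<rho> (y2 - 1)) (y1, s) + Bop \<Phi> (row \<rho> (y2 + 1)) (y1, s))"

definition Gg :: "real \<Rightarrow> ((int \<times> int) \<times> spin \<Rightarrow> complex) \<Rightarrow> ((int \<times> int) \<times> spin \<Rightarrow> complex)" where
  "Gg \<Phi> \<rho> = (\<lambda>((x1, x2), s). cis (- (of_int x1 * of_int x2 * \<Phi> / 2)) * (if s = Up then 1 else \<i>) * \<rho> ((x1, x2), s))"

lemma cis_cos_sin: "cis a = of_real (cos a) + \<i> * of_real (sin a)"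
  by (simp add: complex_eq_iff)

lemma rotA: "(cis a * (u + \<i> * v) + cis (- a) * (u - \<i> * v)) / 2 = of_real (cos a) * u - of_real (sin a) * v"
  by (simp add: cis_cos_sin field_simps)

lemma rotB: "(- \<i> / 2) * cis a * (u + \<i> * v) + (\<i> / 2) * cis (- a) * (u - \<i> * v) = of_real (sin a) * u + of_real (cos a) * v"
  by (simp add: cis_cos_sin field_simps)

lemma uamo_AB: "uamoW \<Phi> \<theta> g = (\<lambda>i. cis \<theta> * Aop \<Phi> g i + cis (- \<theta>) * Bop \<Phi> g i)"
proof (rule ext)
  fix i :: "int \<times> spin"
  obtain y s where i: "i = (y, s)" by fastforce
  show "uamoW \<Phi> \<theta> g i = cis \<theta> * Aop \<Phi> g i + cis (- \<theta>) * Bop \<Phi> g i"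
  proof (cases s)
    case Up
    define b where "b = of_int (y - 1) * \<Phi>"
    define a where "a = ang \<Phi> \<theta> (y - 1)"
    have c1: "cis \<theta> * cis b = cis a" "cis (- \<theta>) * cis (- b) = cis (- a)"
      by (simp_all add: a_def b_def cis_mult ang_def algebra_simps)
    have "cis \<theta> * Aop \<Phi> g i + cis (- \<theta>) * Bop \<Phi> g i
       = ((cis \<theta> * cis b) * (g (y - 1, Up) + \<i> * g (y - 1, Down)) + (cis (- \<theta>) * cis (- b)) * (g (y - 1, Up) - \<i> * g (y - 1, Down))) / 2"
      unfolding i Up Aop_def Bop_def b_def by (simp add: field_simps)
    also have "\<dots> = of_real (cos a) * g (y - 1, Up) - of_real (sin a) * g (y - 1, Down)"
      unfolding c1 by (rule rotA)
    also have "\<dots> = uamoW \<Phi> \<theta> g i"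
      unfolding i Up a_def by (simp add: uamoW_def shiftS_def coinRot_coin2 coin2_def spin_val_def)
    finally show ?thesis by simp
  next
    case Down
    define b where "b = of_int (y + 1) * \<Phi>"
    define a where "a = ang \<Phi> \<theta> (y + 1)"
    have c1: "cis \<theta> * cis b = cis a" "cis (- \<theta>) * cis (- b) = cis (- a)"
      by (simp_all add: a_def b_def cis_mult ang_def algebra_simps)
    have "cis \<theta> * Aop \<Phi> g i + cis (- \<theta>) * Bop \<Phi> g i
       = (- \<i> / 2) * (cis \<theta> * cis b) * (g (y + 1, Up) + \<i> * g (y + 1, Down)) + (\<i> / 2) * (cis (- \<theta>) * cis (- b)) * (g (y + 1, Up) - \<i> * g (y + 1, Down))"
      unfolding i Down Aop_def Bop_def b_def by (simp add: field_simps)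
    also have "\<dots> = of_real (sin a) * g (y + 1, Up) + of_real (cos a) * g (y + 1, Down)"
      unfolding c1 by (rule rotB)
    also have "\<dots> = uamoW \<Phi> \<theta> g i"
      unfolding i Down a_def by (simp add: uamoW_def shiftS_def coinRot_coin2 coin2_def spin_val_def)
    finally show ?thesis by simp
  qed
qed


lemma magW_Up: "magW \<Phi> \<psi> ((y1, y2), Up) = cis (- (of_int y2 * \<Phi> / 2)) * rH *
   (cis (of_int (y1 - 1) * \<Phi> / 2) * rH * (\<psi> ((y1 - 1, y2 - 1), Up) + \<psi> ((y1 - 1, y2 - 1), Down))
  + cis (- (of_int (y1 - 1) * \<Phi> / 2)) * rH * (\<psi> ((y1 - 1, y2 + 1), Up) - \<psi> ((y1 - 1, y2 + 1), Down)))"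
  by (simp add: magW_def diagTT_def T1_def T2_def T1adj_def T2adj_def coinH_coin2 coin2_def algebra_simps)

lemma magW_Down: "magW \<Phi> \<psi> ((y1, y2), Down) = cis (of_int y2 * \<Phi> / 2) * rH *
   (cis (of_int (y1 + 1) * \<Phi> / 2) * rH * (\<psi> ((y1 + 1, y2 - 1), Up) + \<psi> ((y1 + 1, y2 - 1), Down))
  - cis (- (of_int (y1 + 1) * \<Phi> / 2)) * rH * (\<psi> ((y1 + 1, y2 + 1), Up) - \<psi> ((y1 + 1, y2 + 1), Down)))"
  by (simp add: magW_def diagTT_def T1_def T2_def T1adj_def T2adj_def coinH_coin2 coin2_def algebra_simps)

lemma ga1:
  fixes E F1 H1 F2 H2 K L1 L2 r a b c d :: complex
  assumes "E * F1 * H1 = K * L1" "E * F2 * H2 = K * L2" "r * r = 1 / 2"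
  shows "E * r * (F1 * r * (H1 * 1 * a + H1 * \<i> * b) + F2 * r * (H2 * 1 * c - H2 * \<i> * d))
       = K * 1 * ((1/2) * L1 * (a + \<i> * b) + (1/2) * L2 * (c - \<i> * d))"
proof -
  have "E * r * (F1 * r * (H1 * 1 * a + H1 * \<i> * b) + F2 * r * (H2 * 1 * c - H2 * \<i> * d))
      = (r * r) * ((E * F1 * H1) * (a + \<i> * b) + (E * F2 * H2) * (c - \<i> * d))" by algebra
  also have "\<dots> = K * 1 * ((1/2) * L1 * (a + \<i> * b) + (1/2) * L2 * (c - \<i> * d))"
    unfolding assms by algebra
  finally show ?thesis .
qed

lemma ga2:
  fixes E F1 H1 F2 H2 K L1 L2 r a b c d :: complex
  assumes "E * F1 * H1 = K * L1" "E * F2 * H2 = K * L2" "r * r = 1 / 2"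
  shows "E * r * (F1 * r * (H1 * 1 * a + H1 * \<i> * b) - F2 * r * (H2 * 1 * c - H2 * \<i> * d))
       = K * \<i> * ((- \<i> / 2) * L1 * (a + \<i> * b) + (\<i> / 2) * L2 * (c - \<i> * d))"
proof -
  have "E * r * (F1 * r * (H1 * 1 * a + H1 * \<i> * b) - F2 * r * (H2 * 1 * c - H2 * \<i> * d))
      = (r * r) * ((E * F1 * H1) * (a + \<i> * b) - (E * F2 * H2) * (c - \<i> * d))" by algebra
  also have "\<dots> = K * \<i> * ((- \<i> / 2) * L1 * (a + \<i> * b) + (\<i> / 2) * L2 * (c - \<i> * d))"
    unfolding assms by (simp add: field_simps)
  finally show ?thesis .
qed

lemma cis3: "a + b + c = d + e \<Longrightarrow> cis a * cis b * cis c = cis d * cis e"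
  by (simp add: cis_mult)

lemma gauge: "magW \<Phi> (Gg \<Phi> \<rho>) = Gg \<Phi> (Mop \<Phi> \<rho>)"
proof (rule ext)
  fix i :: "(int \<times> int) \<times> spin"
  obtain y1 y2 s where i: "i = ((y1, y2), s)" by (metis prod.collapse)
  show "magW \<Phi> (Gg \<Phi> \<rho>) i = Gg \<Phi> (Mop \<Phi> \<rho>) i"
  proof (cases s)
    case Up
    show ?thesis unfolding i Up magW_Up
      apply (simp only: Gg_def Mop_def Aop_def Bop_def row_def prod.case if_True if_False spin.distinct simp_thms)
      apply (rule ga1[OF _ _ rH_sq])
       apply (rule cis3, simp add: field_simps)
      apply (rule cis3, simp add: field_simps)
      done
  next
    case Down
    show ?thesis unfolding i Down magW_Down
      apply (simp only: Gg_def Mop_def Aop_def Bop_def row_def prod.case if_True if_False spin.distinct simp_thms)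
      apply (rule ga2[OF _ _ rH_sq])
       apply (rule cis3, simp add: field_simps)
      apply (rule cis3, simp add: field_simps)
      done
  qed
qed


definition Ggi :: "real \<Rightarrow> ((int \<times> int) \<times> spin \<Rightarrow> complex) \<Rightarrow> ((int \<times> int) \<times> spin \<Rightarrow> complex)" where
  "Ggi \<Phi> f = (\<lambda>((x1, x2), s). cis (of_int x1 * of_int x2 * \<Phi> / 2) * (if s = Up then 1 else - \<i>) * f ((x1, x2), s))"

lemma Gg_Ggi: "Gg \<Phi> (Ggi \<Phi> f) = f"
proof (rule ext)
  fix i :: "(int \<times> int) \<times> spin"
  obtain x1 x2 s where i: "i = ((x1, x2), s)" by (metis prod.collapse)
  have c: "cis (- a) * cis a = 1" for a by (simp add: cis_mult)
  show "Gg \<Phi> (Ggi \<Phi> f) i = f i"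
    unfolding i Gg_def Ggi_def using c[of "of_int x1 * of_int x2 * \<Phi> / 2"]
    by (cases s) (simp_all add: mult.assoc[symmetric], simp add: algebra_simps)
qed

lemma Gg_norm: "cmod (Gg \<Phi> \<rho> i) = cmod (\<rho> i)"
  by (cases i) (auto simp: Gg_def norm_mult)

lemma Gg_zero: "(Gg \<Phi> \<rho> i = 0) = (\<rho> i = 0)"
  using Gg_norm[of \<Phi> \<rho> i] by (metis norm_eq_zero)

lemma Gg_lin: "Gg \<Phi> (\<lambda>i. a i - z * b i) = (\<lambda>i. Gg \<Phi> a i - z * Gg \<Phi> b i)"
  by (rule ext) (auto simp: Gg_def algebra_simps split: prod.splits)

lemma Az_Gg: "Az (magW \<Phi>) z (Gg \<Phi> \<rho>) = Gg \<Phi> (Az (Mop \<Phi>) z \<rho>)"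
  unfolding Az_def gauge Gg_lin ..

lemma AE_magW_M: "AEfin (magW \<Phi>) z \<longleftrightarrow> AEfin (Mop \<Phi>) z"
proof
  assume a: "AEfin (magW \<Phi>) z"
  show "AEfin (Mop \<Phi>) z" unfolding AEfin_def
  proof (intro allI impI)
    fix \<epsilon> :: real assume e: "\<epsilon> > 0"
    obtain f where f: "finite {i. f i \<noteq> 0}" "\<exists>i. f i \<noteq> 0" "l2norm (Az (magW \<Phi>) z f) \<le> \<epsilon> * l2norm f"
      using a e unfolding AEfin_def by blast
    define \<rho> where "\<rho> = Ggi \<Phi> f"
    have f\<rho>: "f = Gg \<Phi> \<rho>" by (simp add: \<rho>_def Gg_Ggi)
    have "{i. \<rho> i \<noteq> 0} = {i. f i \<noteq> 0}" unfolding f\<rho> Gg_zero by simp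
    then have "finite {i. \<rho> i \<noteq> 0}" using f(1) by simp
    moreover have "\<exists>i. \<rho> i \<noteq> 0" using f(2) unfolding f\<rho> Gg_zero .
    moreover have "l2norm (Az (Mop \<Phi>) z \<rho>) \<le> \<epsilon> * l2norm \<rho>"
      using f(3) unfolding f\<rho> Az_Gg l2_cong_norm(2)[OF Gg_norm] .
    ultimately show "\<exists>f. finite {i. f i \<noteq> 0} \<and> (\<exists>i. f i \<noteq> 0) \<and> l2norm (Az (Mop \<Phi>) z f) \<le> \<epsilon> * l2norm f"
      by blast
  qed
next
  assume a: "AEfin (Mop \<Phi>) z"
  show "AEfin (magW \<Phi>) z" unfolding AEfin_def
  proof (intro allI impI)
    fix \<epsilon> :: real assume e: "\<epsilon> > 0"
    obtain \<rho> where r: "finite {i. \<rho> i \<noteq> 0}" "\<exists>i. \<rho> i \<noteq> 0" "l2norm (Az (Mop \<Phi>) z \<rho>) \<le> \<epsilon> * l2norm \<rho>"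
      using a e unfolding AEfin_def by blast
    have "{i. Gg \<Phi> \<rho> i \<noteq> 0} = {i. \<rho> i \<noteq> 0}" unfolding Gg_zero by simp
    moreover have "\<exists>i. Gg \<Phi> \<rho> i \<noteq> 0" using r(2) unfolding Gg_zero .
    moreover have "l2norm (Az (magW \<Phi>) z (Gg \<Phi> \<rho>)) \<le> \<epsilon> * l2norm (Gg \<Phi> \<rho>)"
      unfolding Az_Gg l2_cong_norm(2)[OF Gg_norm] by (rule r(3))
    ultimately show "\<exists>f. finite {i. f i \<noteq> 0} \<and> (\<exists>i. f i \<noteq> 0) \<and> l2norm (Az (magW \<Phi>) z f) \<le> \<epsilon> * l2norm f"
      using r(1) by metis
  qed
qed


definition tau :: "int \<Rightarrow> (int \<times> spin \<Rightarrow> complex) \<Rightarrow> (int \<times> spin \<Rightarrow> complex)" where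
  "tau n g = (\<lambda>(x, s). g (x + n, s))"

lemma tau_wperm: "tau n = wperm (\<lambda>_. 1) (\<lambda>(x, s). (x + n, s))"
  by (rule ext, rule ext) (auto simp: tau_def wperm_def split: prod.splits)

lemma goodlin_tau: "goodlin (tau n)"
  unfolding tau_wperm by (rule goodlin_wperm) (auto simp: inj_def)

lemma tau_tau: "tau (- n) (tau n g) = g"
  by (rule ext) (auto simp: tau_def split: prod.splits)

lemma tau_norm:
  assumes "g \<in> l2" shows "tau n g \<in> l2" "l2norm (tau n g) = l2norm g"
proof -
  have c: "contr (tau m)" for m using goodlinD(2)[OF goodlin_tau] .
  show t: "tau n g \<in> l2" using contrD(1)[OF c assms] .
  have "l2norm (tau n g) \<le> l2norm g" using contrD(2)[OF c assms] .
  moreover have "l2norm (tau (- n) (tau n g)) \<le> l2norm (tau n g)" using contrD(2)[OF c t] .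
  ultimately show "l2norm (tau n g) = l2norm g" unfolding tau_tau by simp
qed

lemma tau_supp:
  assumes "finite {i. g i \<noteq> 0}" shows "finite {i. tau n g i \<noteq> 0}"
proof -
  have "{i. tau n g i \<noteq> 0} \<subseteq> (\<lambda>(x, s). (x - n, s)) ` {i. g i \<noteq> 0}"
  proof
    fix i assume "i \<in> {i. tau n g i \<noteq> 0}"
    then obtain x s where "i = (x, s)" "g (x + n, s) \<noteq> 0" by (cases i) (auto simp: tau_def)
    then show "i \<in> (\<lambda>(x, s). (x - n, s)) ` {i. g i \<noteq> 0}" by (auto intro!: image_eqI[of _ _ "(x + n, s)"])
  qed
  then show ?thesis using assms by (rule finite_subset[OF _ finite_imageI])
qed

lemma tau_nz: assumes "\<exists>i. g i \<noteq> 0" shows "\<exists>i. tau n g i \<noteq> 0"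
proof -
  obtain x s where "g (x, s) \<noteq> 0" using assms by auto
  then have "tau n g (x - n, s) \<noteq> 0" by (simp add: tau_def)
  then show ?thesis by blast
qed

lemma uamoW_tau: "uamoW \<Phi> (\<theta> + of_int n * \<Phi>) (tau n g) = tau n (uamoW \<Phi> \<theta> g)"
proof (rule ext)
  fix i :: "int \<times> spin"
  obtain y s where i: "i = (y, s)" by fastforce
  have a1: "ang \<Phi> (\<theta> + of_int n * \<Phi>) (y - 1) = ang \<Phi> \<theta> (y + n - 1)"
    and a2: "ang \<Phi> (\<theta> + of_int n * \<Phi>) (y + 1) = ang \<Phi> \<theta> (y + n + 1)"
    by (simp_all add: ang_def algebra_simps)
  show "uamoW \<Phi> (\<theta> + of_int n * \<Phi>) (tau n g) i = tau n (uamoW \<Phi> \<theta> g) i"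
    unfolding i by (cases s) (simp_all add: uamoW_def shiftS_def coinRot_coin2 coin2_def spin_val_def tau_def ang_def algebra_simps)
qed

lemma Az_tau: "Az (uamoW \<Phi> (\<theta> + of_int n * \<Phi>)) z (tau n g) = tau n (Az (uamoW \<Phi> \<theta>) z g)"
  unfolding Az_def uamoW_tau by (rule ext) (auto simp: tau_def split: prod.splits)

lemma cos_2pim: "cos (a + 2 * pi * of_int m) = cos a" and sin_2pim: "sin (a + 2 * pi * of_int m) = sin a"
  by (simp_all add: cos_add sin_add)

lemma uamoW_period: "uamoW \<Phi> (\<theta> + 2 * pi * of_int m) = uamoW \<Phi> \<theta>"
proof -
  have "ang \<Phi> (\<theta> + 2 * pi * of_int m) x = ang \<Phi> \<theta> x + 2 * pi * of_int m" for x by (simp add: ang_def)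
  then show ?thesis unfolding uamoW_def coinRot_coin2 by (simp add: cos_2pim sin_2pim)
qed

lemma coin2_bound:
  assumes un: "\<And>x u v. (cmod (a x * u + b x * v))\<^sup>2 + (cmod (c x * u + d x * v))\<^sup>2 \<le> K\<^sup>2 * ((cmod u)\<^sup>2 + (cmod v)\<^sup>2)"
    and K: "K \<ge> 0" and f: "f \<in> l2"
  shows "coin2 a b c d f \<in> l2 \<and> l2norm (coin2 a b c d f) \<le> K * l2norm f"
proof (rule l2_from_bound)
  fix F :: "('a \<times> spin) set" assume F: "finite F"
  define X where "X = fst ` F"
  have X: "finite X" using F by (simp add: X_def)
  have FX: "F \<subseteq> X \<times> UNIV" by (force simp: X_def)
  have "(\<Sum>i\<in>F. (cmod (coin2 a b c d f i))\<^sup>2) \<le> (\<Sum>i\<in>X \<times> UNIV. (cmod (coin2 a b c d f i))\<^sup>2)"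
    by (rule sum_mono2) (use X FX in auto)
  also have "\<dots> = (\<Sum>x\<in>X. (cmod (a x * f (x, Up) + b x * f (x, Down)))\<^sup>2 + (cmod (c x * f (x, Up) + d x * f (x, Down)))\<^sup>2)"
    by (simp add: sum_XU coin2_def)
  also have "\<dots> \<le> (\<Sum>x\<in>X. K\<^sup>2 * ((cmod (f (x, Up)))\<^sup>2 + (cmod (f (x, Down)))\<^sup>2))"
    by (rule sum_mono) (rule un)
  also have "\<dots> = K\<^sup>2 * (\<Sum>i\<in>X \<times> UNIV. (cmod (f i))\<^sup>2)"
    by (simp add: sum_XU sum_distrib_left)
  also have "\<dots> \<le> K\<^sup>2 * (l2norm f)\<^sup>2" by (rule mult_left_mono, rule l2_sum_le[OF f]) (use X in simp_all)
  finally show "(\<Sum>i\<in>F. (cmod (coin2 a b c d f i))\<^sup>2) \<le> (K * l2norm f)\<^sup>2" by (simp add: power_mult_distrib)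
qed (use K l2norm_nonneg[of f] in simp)

lemma cossin_diff: fixes a b :: real shows "(cos a - cos b)\<^sup>2 + (sin a - sin b)\<^sup>2 \<le> (a - b)\<^sup>2"
proof -
  have "(cos a - cos b)\<^sup>2 + (sin a - sin b)\<^sup>2 = ((sin a)\<^sup>2 + (cos a)\<^sup>2) + ((sin b)\<^sup>2 + (cos b)\<^sup>2) - 2 * (cos a * cos b + sin a * sin b)"
    by (simp add: power2_eq_square algebra_simps)
  also have "\<dots> = 2 - 2 * cos (a - b)" by (simp add: cos_diff)
  also have "\<dots> = 4 * (sin ((a - b) / 2))\<^sup>2"
  proof -
    have "cos (a - b) = cos (2 * ((a - b) / 2))" by (simp only: times_divide_eq_right nonzero_mult_div_cancel_left zero_neq_numeral not_False_eq_True)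
    also have "\<dots> = 1 - 2 * (sin ((a - b) / 2))\<^sup>2" by (rule cos_double_sin)
    finally show ?thesis by simp
  qed
  also have "\<dots> \<le> 4 * ((a - b) / 2)\<^sup>2"
  proof -
    have "\<bar>sin ((a - b) / 2)\<bar> \<le> \<bar>(a - b) / 2\<bar>" by (rule abs_sin_x_le_abs_x)
    then have "(sin ((a - b) / 2))\<^sup>2 \<le> ((a - b) / 2)\<^sup>2" by (simp only: abs_le_square_iff)
    then show ?thesis by simp
  qed
  also have "\<dots> = (a - b)\<^sup>2" by (simp add: power2_eq_square field_simps)
  finally show ?thesis .
qed

lemma rot_diff_bound:
  fixes p q r s :: real and u v :: complex
  assumes "p\<^sup>2 + q\<^sup>2 \<le> D\<^sup>2"
  shows "(cmod (of_real p * u + - of_real q * v))\<^sup>2 + (cmod (of_real q * u + of_real p * v))\<^sup>2 \<le> D\<^sup>2 * ((cmod u)\<^sup>2 + (cmod v)\<^sup>2)"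
proof -
  have "(cmod (of_real p * u + - of_real q * v))\<^sup>2 + (cmod (of_real q * u + of_real p * v))\<^sup>2 = (p\<^sup>2 + q\<^sup>2) * ((cmod u)\<^sup>2 + (cmod v)\<^sup>2)"
    unfolding cmod_power2 by (simp add: power2_eq_square algebra_simps)
  also have "\<dots> \<le> D\<^sup>2 * ((cmod u)\<^sup>2 + (cmod v)\<^sup>2)" by (rule mult_right_mono[OF assms]) simp
  finally show ?thesis .
qed

lemma uamo_diff:
  assumes g: "g \<in> l2"
  shows "l2norm (\<lambda>i. uamoW \<Phi> \<theta> g i - uamoW \<Phi> \<theta>' g i) \<le> \<bar>\<theta> - \<theta>'\<bar> * l2norm g"
proof -
  define dc where "dc x = cos (ang \<Phi> \<theta> x) - cos (ang \<Phi> \<theta>' x)" for x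
  define ds where "ds x = sin (ang \<Phi> \<theta> x) - sin (ang \<Phi> \<theta>' x)" for x
  have cd: "(\<lambda>i. coinRot \<Phi> \<theta> g i - coinRot \<Phi> \<theta>' g i) =
     coin2 (\<lambda>x. of_real (dc x)) (\<lambda>x. - of_real (ds x)) (\<lambda>x. of_real (ds x)) (\<lambda>x. of_real (dc x)) g"
    by (rule ext) (auto simp: coinRot_coin2 coin2_def dc_def ds_def algebra_simps split: prod.splits)
  have b: "(dc x)\<^sup>2 + (ds x)\<^sup>2 \<le> \<bar>\<theta> - \<theta>'\<bar>\<^sup>2" for x
    using cossin_diff[of "ang \<Phi> \<theta> x" "ang \<Phi> \<theta>' x"] by (simp add: dc_def ds_def ang_def)
  have cb: "coin2 (\<lambda>x. of_real (dc x)) (\<lambda>x. - of_real (ds x)) (\<lambda>x. of_real (ds x)) (\<lambda>x. of_real (dc x)) g \<in> l2 \<and>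
      l2norm (coin2 (\<lambda>x. of_real (dc x)) (\<lambda>x. - of_real (ds x)) (\<lambda>x. of_real (ds x)) (\<lambda>x. of_real (dc x)) g) \<le> \<bar>\<theta> - \<theta>'\<bar> * l2norm g"
    by (rule coin2_bound[OF rot_diff_bound[OF b] _ g]) simp
  have "(\<lambda>i. uamoW \<Phi> \<theta> g i - uamoW \<Phi> \<theta>' g i) = shiftS (\<lambda>i. coinRot \<Phi> \<theta> g i - coinRot \<Phi> \<theta>' g i)"
    using linop_diff[OF goodlinD(1)[OF goodlin_shift(1)]] by (simp add: uamoW_def)
  also have "\<dots> = shiftS (coin2 (\<lambda>x. of_real (dc x)) (\<lambda>x. - of_real (ds x)) (\<lambda>x. of_real (ds x)) (\<lambda>x. of_real (dc x)) g)"
    unfolding cd ..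
  finally have e: "(\<lambda>i. uamoW \<Phi> \<theta> g i - uamoW \<Phi> \<theta>' g i) = shiftS (coin2 (\<lambda>x. of_real (dc x)) (\<lambda>x. - of_real (ds x)) (\<lambda>x. of_real (ds x)) (\<lambda>x. of_real (dc x)) g)" .
  show ?thesis unfolding e
    using contrD(2)[OF goodlinD(2)[OF goodlin_shift(1)] cb[THEN conjunct1]] cb by linarith
qed

lemma density:
  assumes irr: "\<Phi> / (2 * pi) \<notin> \<rat>"
    and H: "\<And>\<epsilon>. \<epsilon> > 0 \<Longrightarrow> \<exists>k g. finite {i. g i \<noteq> 0} \<and> (\<exists>i. g i \<noteq> 0) \<and> l2norm (Az (uamoW \<Phi> k) z g) \<le> \<epsilon> * l2norm g"
  shows "AEfin (uamoW \<Phi> \<theta>) z"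
  unfolding AEfin_def
proof (intro allI impI)
  fix \<epsilon> :: real assume e: "\<epsilon> > 0"
  obtain k g where g: "finite {i. g i \<noteq> 0}" "\<exists>i. g i \<noteq> 0" "l2norm (Az (uamoW \<Phi> k) z g) \<le> (\<epsilon> / 2) * l2norm g"
    using H[of "\<epsilon> / 2"] e by auto
  define \<delta> where "\<delta> = \<epsilon> / (8 * pi)"
  have d0: "\<delta> > 0" using e by (simp add: \<delta>_def)
  obtain h n where hn: "n > 0" "\<bar>of_int n * (\<Phi> / (2 * pi)) - of_int h - (\<theta> - k) / (2 * pi)\<bar> < \<delta>"
    using sequence_of_fractional_parts_is_dense[OF irr d0] by metis
  define \<theta>2 where "\<theta>2 = k + of_int n * \<Phi> + 2 * pi * of_int (- h)"
  have "\<theta>2 - \<theta> = 2 * pi * (of_int n * (\<Phi> / (2 * pi)) - of_int h - (\<theta> - k) / (2 * pi))"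
    by (simp add: \<theta>2_def field_simps)
  then have dth: "\<bar>\<theta> - \<theta>2\<bar> \<le> \<epsilon> / 4"
  proof -
    assume eq: "\<theta>2 - \<theta> = 2 * pi * (of_int n * (\<Phi> / (2 * pi)) - of_int h - (\<theta> - k) / (2 * pi))"
    have "\<bar>\<theta> - \<theta>2\<bar> = 2 * pi * \<bar>of_int n * (\<Phi> / (2 * pi)) - of_int h - (\<theta> - k) / (2 * pi)\<bar>"
      by (subst abs_minus_commute) (simp add: eq abs_mult)
    also have "\<dots> \<le> 2 * pi * \<delta>" using hn(2) by simp
    also have "\<dots> = \<epsilon> / 4" by (simp add: \<delta>_def)
    finally show ?thesis .
  qed
  have U2: "uamoW \<Phi> \<theta>2 = uamoW \<Phi> (k + of_int n * \<Phi>)" unfolding \<theta>2_def by (rule uamoW_period)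
  define g' where "g' = tau n g"
  have gl2: "g \<in> l2" by (rule finsupp_l2'[OF g(1)])
  have g'l2: "g' \<in> l2" and ng': "l2norm g' = l2norm g" using tau_norm[OF gl2] by (auto simp: g'_def)
  have az2: "Az (uamoW \<Phi> \<theta>2) z g' = tau n (Az (uamoW \<Phi> k) z g)" unfolding U2 g'_def by (rule Az_tau)
  have azl: "Az (uamoW \<Phi> k) z g \<in> l2" by (rule Az_l2(1)[OF goodlinD(2)[OF goodlin_uamoW(1)] gl2])
  have n2: "l2norm (Az (uamoW \<Phi> \<theta>2) z g') \<le> (\<epsilon> / 2) * l2norm g'"
    unfolding az2 tau_norm(2)[OF azl] ng' by (rule g(3))
  have az2l: "Az (uamoW \<Phi> \<theta>2) z g' \<in> l2" by (rule Az_l2(1)[OF goodlinD(2)[OF goodlin_uamoW(1)] g'l2])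
  have dl: "(\<lambda>i. uamoW \<Phi> \<theta> g' i - uamoW \<Phi> \<theta>2 g' i) \<in> l2"
    using l2_diff[OF contrD(1)[OF goodlinD(2)[OF goodlin_uamoW(1)] g'l2] contrD(1)[OF goodlinD(2)[OF goodlin_uamoW(1)] g'l2]] by blast
  have split: "Az (uamoW \<Phi> \<theta>) z g' = (\<lambda>i. Az (uamoW \<Phi> \<theta>2) z g' i + (uamoW \<Phi> \<theta> g' i - uamoW \<Phi> \<theta>2 g' i))"
    by (simp add: Az_def)
  have "l2norm (Az (uamoW \<Phi> \<theta>) z g') \<le> l2norm (Az (uamoW \<Phi> \<theta>2) z g') + l2norm (\<lambda>i. uamoW \<Phi> \<theta> g' i - uamoW \<Phi> \<theta>2 g' i)"
    unfolding split using l2_add[OF az2l dl] by blast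
  also have "\<dots> \<le> (\<epsilon> / 2) * l2norm g' + \<bar>\<theta> - \<theta>2\<bar> * l2norm g'"
    using n2 uamo_diff[OF g'l2, of \<Phi> \<theta> \<theta>2] by linarith
  also have "\<dots> \<le> (\<epsilon> / 2) * l2norm g' + (\<epsilon> / 4) * l2norm g'"
    using mult_right_mono[OF dth l2norm_nonneg[of g']] by linarith
  also have "\<dots> \<le> \<epsilon> * l2norm g'" using e l2norm_nonneg[of g'] by (simp add: field_simps)
  finally have "l2norm (Az (uamoW \<Phi> \<theta>) z g') \<le> \<epsilon> * l2norm g'" .
  moreover have "finite {i. g' i \<noteq> 0}" unfolding g'_def by (rule tau_supp[OF g(1)])
  moreover have "\<exists>i. g' i \<noteq> 0" unfolding g'_def by (rule tau_nz[OF g(2)])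
  ultimately show "\<exists>f. finite {i. f i \<noteq> 0} \<and> (\<exists>i. f i \<noteq> 0) \<and> l2norm (Az (uamoW \<Phi> \<theta>) z f) \<le> \<epsilon> * l2norm f"
    by blast
qed


definition tens :: "(int \<Rightarrow> complex) \<Rightarrow> (int \<times> spin \<Rightarrow> complex) \<Rightarrow> ((int \<times> int) \<times> spin \<Rightarrow> complex)" where
  "tens u g = (\<lambda>((x1, x2), s). u x2 * g (x1, s))"

lemma tens_norm:
  assumes fu: "finite {x. u x \<noteq> 0}" and fg: "finite {i. g i \<noteq> 0}"
  shows "finite {i. tens u g i \<noteq> 0}" "l2norm (tens u g) = l2norm u * l2norm g"
proof -
  define Su where "Su = {x. u x \<noteq> 0}"
  define Sg where "Sg = {i. g i \<noteq> 0}"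
  define m where "m = (\<lambda>(x2::int, (x1::int, s::spin)). ((x1, x2), s))"
  define T where "T = m ` (Su \<times> Sg)"
  have fT: "finite T" unfolding T_def Su_def Sg_def using fu fg by simp
  have inj: "inj_on m (Su \<times> Sg)" unfolding m_def inj_on_def by auto
  have zero: "tens u g i = 0" if "i \<notin> T" for i
  proof -
    obtain x1 x2 s where i: "i = ((x1, x2), s)" by (metis prod.collapse)
    have "\<not> (u x2 \<noteq> 0 \<and> g (x1, s) \<noteq> 0)"
    proof
      assume "u x2 \<noteq> 0 \<and> g (x1, s) \<noteq> 0"
      then have "(x2, (x1, s)) \<in> Su \<times> Sg" by (simp add: Su_def Sg_def)
      then have "i \<in> T" unfolding T_def i m_def by force
      then show False using that by simp
    qed
    then show ?thesis by (auto simp: tens_def i)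
  qed
  show "finite {i. tens u g i \<noteq> 0}" using zero by (intro finite_subset[OF _ fT]) auto
  have "l2norm (tens u g) = sqrt (\<Sum>i\<in>T. (cmod (tens u g i))\<^sup>2)" by (rule finsupp_l2(2)[OF fT zero])
  also have "(\<Sum>i\<in>T. (cmod (tens u g i))\<^sup>2) = (\<Sum>p\<in>Su \<times> Sg. (cmod (tens u g (m p)))\<^sup>2)"
    unfolding T_def by (rule sum.reindex[OF inj, unfolded comp_def])
  also have "\<dots> = (\<Sum>p\<in>Su \<times> Sg. (cmod (u (fst p)))\<^sup>2 * (cmod (g (snd p)))\<^sup>2)"
    by (rule sum.cong) (auto simp: m_def tens_def norm_mult power_mult_distrib)
  also have "\<dots> = (\<Sum>x\<in>Su. (cmod (u x))\<^sup>2) * (\<Sum>j\<in>Sg. (cmod (g j))\<^sup>2)"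
    by (simp add: sum_product sum.cartesian_product case_prod_beta)
  finally have "l2norm (tens u g) = sqrt (\<Sum>x\<in>Su. (cmod (u x))\<^sup>2) * sqrt (\<Sum>j\<in>Sg. (cmod (g j))\<^sup>2)"
    by (simp add: real_sqrt_mult)
  moreover have "l2norm u = sqrt (\<Sum>x\<in>Su. (cmod (u x))\<^sup>2)"
    by (rule finsupp_l2(2)) (use fu in \<open>auto simp: Su_def\<close>)
  moreover have "l2norm g = sqrt (\<Sum>j\<in>Sg. (cmod (g j))\<^sup>2)"
    by (rule finsupp_l2(2)) (use fg in \<open>auto simp: Sg_def\<close>)
  ultimately show "l2norm (tens u g) = l2norm u * l2norm g" by simp
qed

lemma Aop_scale: "Aop \<Phi> (\<lambda>i. c * g i) = (\<lambda>i. c * Aop \<Phi> g i)"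
  by (rule ext) (auto simp: Aop_def algebra_simps split: prod.splits)

lemma Bop_scale: "Bop \<Phi> (\<lambda>i. c * g i) = (\<lambda>i. c * Bop \<Phi> g i)"
  by (rule ext) (auto simp: Bop_def algebra_simps split: prod.splits)

lemma row_tens: "row (tens u g) x2 = (\<lambda>i. u x2 * g i)"
  by (rule ext) (auto simp: row_def tens_def split: prod.splits)

lemma Mop_tens: "Mop \<Phi> (tens u g) ((y1, y2), s) = u (y2 - 1) * Aop \<Phi> g (y1, s) + u (y2 + 1) * Bop \<Phi> g (y1, s)"
  by (simp add: Mop_def row_tens Aop_scale Bop_scale)

lemma supp_AB:
  assumes "finite {i. g i \<noteq> 0}"
  shows "finite {i. Aop \<Phi> g i \<noteq> 0}" "finite {i. Bop \<Phi> g i \<noteq> 0}"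
proof -
  define S where "S = (\<lambda>(x, d, s). (x + d, s)) ` (fst ` {i. g i \<noteq> 0} \<times> {-1, 1::int} \<times> (UNIV :: spin set))"
  have fS: "finite S" unfolding S_def using assms by simp
  have mem: "(y, s) \<in> S" if "g (y - 1, s') \<noteq> 0 \<or> g (y + 1, s') \<noteq> 0" for y s s'
  proof -
    from that consider "g (y - 1, s') \<noteq> 0" | "g (y + 1, s') \<noteq> 0" by blast
    then show ?thesis
    proof cases
      case 1
      then have "y - 1 \<in> fst ` {i. g i \<noteq> 0}" by force
      then have "((y - 1), 1::int, s) \<in> fst ` {i. g i \<noteq> 0} \<times> {-1, 1} \<times> UNIV" by simp
      then show ?thesis unfolding S_def by (force intro: image_eqI)
    next
      case 2
      then have "y + 1 \<in> fst ` {i. g i \<noteq> 0}" by force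
      then have "((y + 1), -1::int, s) \<in> fst ` {i. g i \<noteq> 0} \<times> {-1, 1} \<times> UNIV" by simp
      then show ?thesis unfolding S_def by (force intro: image_eqI)
    qed
  qed
  have "{i. Aop \<Phi> g i \<noteq> 0} \<subseteq> S"
  proof
    fix i assume i: "i \<in> {i. Aop \<Phi> g i \<noteq> 0}"
    obtain y s where ys: "i = (y, s)" by fastforce
    have "g (y - 1, Up) \<noteq> 0 \<or> g (y - 1, Down) \<noteq> 0 \<or> g (y + 1, Up) \<noteq> 0 \<or> g (y + 1, Down) \<noteq> 0"
      using i unfolding ys by (cases s) (auto simp: Aop_def)
    then show "i \<in> S" using mem ys by blast
  qed
  then show "finite {i. Aop \<Phi> g i \<noteq> 0}" using fS by (rule finite_subset)
  have "{i. Bop \<Phi> g i \<noteq> 0} \<subseteq> S"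
  proof
    fix i assume i: "i \<in> {i. Bop \<Phi> g i \<noteq> 0}"
    obtain y s where ys: "i = (y, s)" by fastforce
    have "g (y - 1, Up) \<noteq> 0 \<or> g (y - 1, Down) \<noteq> 0 \<or> g (y + 1, Up) \<noteq> 0 \<or> g (y + 1, Down) \<noteq> 0"
      using i unfolding ys by (cases s) (auto simp: Bop_def)
    then show "i \<in> S" using mem ys by blast
  qed
  then show "finite {i. Bop \<Phi> g i \<noteq> 0}" using fS by (rule finite_subset)
qed

definition chi :: "nat \<Rightarrow> int \<Rightarrow> complex" where
  "chi L x = (if 0 \<le> x \<and> x < int L then 1 else 0)"

definition ee :: "real \<Rightarrow> int \<Rightarrow> complex" where
  "ee \<theta> x = cis (- (\<theta> * of_int x))"

lemma ee_m1: "ee \<theta> (x - 1) = ee \<theta> x * cis \<theta>" and ee_p1: "ee \<theta> (x + 1) = ee \<theta> x * cis (- \<theta>)"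
  by (simp_all add: ee_def cis_mult algebra_simps)

lemma ee_p1': "ee \<theta> (1 + x) = ee \<theta> x * cis (- \<theta>)" and ee_m1': "ee \<theta> (-1 + x) = ee \<theta> x * cis \<theta>"
  by (simp_all add: ee_def cis_mult algebra_simps)

lemma cmod_ee: "cmod (ee \<theta> x) = 1" by (simp add: ee_def)

lemma decomp:
  "Az (Mop \<Phi>) z (tens (\<lambda>x. ee \<theta> x * chi L x) \<phi>) =
   (\<lambda>i. tens (\<lambda>x. ee \<theta> x * chi L x) (Az (uamoW \<Phi> \<theta>) z \<phi>) i
      + tens (\<lambda>x. ee \<theta> x * (chi L (x - 1) - chi L x)) (\<lambda>i. cis \<theta> * Aop \<Phi> \<phi> i) i
      + tens (\<lambda>x. ee \<theta> x * (chi L (x + 1) - chi L x)) (\<lambda>i. cis (- \<theta>) * Bop \<Phi> \<phi> i) i)"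
proof (rule ext)
  fix i :: "(int \<times> int) \<times> spin"
  obtain y1 y2 s where i: "i = ((y1, y2), s)" by (metis prod.collapse)
  show "Az (Mop \<Phi>) z (tens (\<lambda>x. ee \<theta> x * chi L x) \<phi>) i = tens (\<lambda>x. ee \<theta> x * chi L x) (Az (uamoW \<Phi> \<theta>) z \<phi>) i
      + tens (\<lambda>x. ee \<theta> x * (chi L (x - 1) - chi L x)) (\<lambda>i. cis \<theta> * Aop \<Phi> \<phi> i) i
      + tens (\<lambda>x. ee \<theta> x * (chi L (x + 1) - chi L x)) (\<lambda>i. cis (- \<theta>) * Bop \<Phi> \<phi> i) i"
  proof -
    have e1: "ee \<theta> (y2 - 1) = ee \<theta> y2 * cis \<theta>" "ee \<theta> (y2 + 1) = ee \<theta> y2 * cis (- \<theta>)" by (rule ee_m1, rule ee_p1)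
    show ?thesis
      unfolding i Az_def Mop_tens uamo_AB by (simp only: tens_def prod.case e1) (simp add: algebra_simps)
  qed
qed

lemma u0_norm:
  shows "finite {x. ee \<theta> x * chi L x \<noteq> 0}" "l2norm (\<lambda>x. ee \<theta> x * chi L x) = sqrt (real L)"
proof -
  have z: "ee \<theta> x * chi L x = 0" if "x \<notin> {0..<int L}" for x using that by (auto simp: chi_def)
  have "{x. ee \<theta> x * chi L x \<noteq> 0} \<subseteq> {0..<int L}" using z by blast
  then show "finite {x. ee \<theta> x * chi L x \<noteq> 0}" by (rule finite_subset) simp
  have "l2norm (\<lambda>x. ee \<theta> x * chi L x) = sqrt (\<Sum>x\<in>{0..<int L}. (cmod (ee \<theta> x * chi L x))\<^sup>2)"
    by (rule finsupp_l2(2)) (simp, use z in blast)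
  also have "(\<Sum>x\<in>{0..<int L}. (cmod (ee \<theta> x * chi L x))\<^sup>2) = (\<Sum>x\<in>{0..<int L}. 1)"
  proof (rule sum.cong)
    fix x assume "x \<in> {0..<int L}"
    then have "chi L x = 1" by (simp add: chi_def)
    then show "(cmod (ee \<theta> x * chi L x))\<^sup>2 = 1" by (simp add: norm_mult cmod_ee)
  qed simp
  finally show "l2norm (\<lambda>x. ee \<theta> x * chi L x) = sqrt (real L)" by simp
qed

lemma chi_diff_le: "cmod (chi L a - chi L b) \<le> 1"
  by (simp add: chi_def)

lemma ud_norm:
  assumes "\<And>x. x \<notin> {a, b} \<Longrightarrow> chi L (x + d) = chi L x"
  shows "finite {x. ee \<theta> x * (chi L (x + d) - chi L x) \<noteq> 0}" "l2norm (\<lambda>x. ee \<theta> x * (chi L (x + d) - chi L x)) \<le> sqrt 2"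
proof -
  have z: "ee \<theta> x * (chi L (x + d) - chi L x) = 0" if "x \<notin> {a, b}" for x using assms[OF that] by simp
  have "{x. ee \<theta> x * (chi L (x + d) - chi L x) \<noteq> 0} \<subseteq> {a, b}" using z by blast
  then show "finite {x. ee \<theta> x * (chi L (x + d) - chi L x) \<noteq> 0}" by (rule finite_subset) simp
  have "l2norm (\<lambda>x. ee \<theta> x * (chi L (x + d) - chi L x)) = sqrt (\<Sum>x\<in>{a, b}. (cmod (ee \<theta> x * (chi L (x + d) - chi L x)))\<^sup>2)"
    by (rule finsupp_l2(2)) (simp, use z in blast)
  also have "(\<Sum>x\<in>{a, b}. (cmod (ee \<theta> x * (chi L (x + d) - chi L x)))\<^sup>2) \<le> (\<Sum>x\<in>{a, b}. 1)"
  proof (rule sum_mono)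
    fix x
    have "cmod (ee \<theta> x * (chi L (x + d) - chi L x)) \<le> 1" by (simp add: norm_mult cmod_ee chi_diff_le)
    then show "(cmod (ee \<theta> x * (chi L (x + d) - chi L x)))\<^sup>2 \<le> 1" by (simp add: power_le_one)
  qed
  also have "(\<Sum>x\<in>{a, b}. (1::real)) \<le> 2" by (simp add: card_insert_if)
  finally show "l2norm (\<lambda>x. ee \<theta> x * (chi L (x + d) - chi L x)) \<le> sqrt 2" by simp
qed

lemma chi_m1: "x \<notin> {0, int L} \<Longrightarrow> chi L (x + - 1) = chi L x"
  by (auto simp: chi_def)
lemma chi_p1: "x \<notin> {-1, int L - 1} \<Longrightarrow> chi L (x + 1) = chi L x"
  by (auto simp: chi_def)

lemma finsupp_scale: fixes g :: "'a \<Rightarrow> complex" shows "finite {i. g i \<noteq> 0} \<Longrightarrow> finite {i. c * g i \<noteq> 0}"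
proof -
  assume f: "finite {i. g i \<noteq> 0}"
  have "{i. c * g i \<noteq> 0} \<subseteq> {i. g i \<noteq> 0}" by auto
  then show ?thesis using f by (rule finite_subset)
qed

lemma AE_uamo_M:
  assumes a: "AEfin (uamoW \<Phi> \<theta>) z"
  shows "AEfin (Mop \<Phi>) z"
  unfolding AEfin_def
proof (intro allI impI)
  fix \<epsilon> :: real assume e: "\<epsilon> > 0"
  obtain \<phi> where ph: "finite {i. \<phi> i \<noteq> 0}" "\<exists>i. \<phi> i \<noteq> 0" "l2norm (Az (uamoW \<Phi> \<theta>) z \<phi>) \<le> (\<epsilon> / 2) * l2norm \<phi>"
    using a e unfolding AEfin_def by (meson half_gt_zero)
  have phl2: "\<phi> \<in> l2" by (rule finsupp_l2'[OF ph(1)])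
  have npos: "l2norm \<phi> > 0"
  proof -
    obtain i where "\<phi> i \<noteq> 0" using ph(2) by blast
    then have "l2norm \<phi> \<noteq> 0" using l2norm_eq0[OF phl2, of i] by blast
    then show ?thesis using l2norm_nonneg[of \<phi>] by linarith
  qed
  define P where "P = (\<lambda>i. cis \<theta> * Aop \<Phi> \<phi> i)"
  define Q where "Q = (\<lambda>i. cis (- \<theta>) * Bop \<Phi> \<phi> i)"
  define E where "E = Az (uamoW \<Phi> \<theta>) z \<phi>"
  have fP: "finite {i. P i \<noteq> 0}" unfolding P_def by (rule finsupp_scale[OF supp_AB(1)[OF ph(1)]])
  have fQ: "finite {i. Q i \<noteq> 0}" unfolding Q_def by (rule finsupp_scale[OF supp_AB(2)[OF ph(1)]])
  have fE: "finite {i. E i \<noteq> 0}"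
  proof -
    have "{i. E i \<noteq> 0} \<subseteq> {i. P i \<noteq> 0} \<union> {i. Q i \<noteq> 0} \<union> {i. \<phi> i \<noteq> 0}"
      by (auto simp: E_def Az_def uamo_AB P_def Q_def)
    moreover have "finite ({i. P i \<noteq> 0} \<union> {i. Q i \<noteq> 0} \<union> {i. \<phi> i \<noteq> 0})" using fP fQ ph(1) by simp
    ultimately show ?thesis by (rule finite_subset)
  qed
  define K where "K = sqrt 2 * (l2norm P + l2norm Q)"
  have K0: "K \<ge> 0" by (simp add: K_def l2norm_nonneg)
  define c where "c = (\<epsilon> / 2) * l2norm \<phi>"
  have c0: "c > 0" using e npos by (simp add: c_def)
  define L where "L = nat \<lceil>(K / c)\<^sup>2\<rceil> + 1"
  have L1: "L \<ge> 1" by (simp add: L_def)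
  have "(K / c)\<^sup>2 \<le> real L" unfolding L_def by linarith
  then have "sqrt ((K / c)\<^sup>2) \<le> sqrt (real L)" by (rule real_sqrt_le_mono)
  then have "K / c \<le> sqrt (real L)" using K0 c0 by simp
  then have KL: "K \<le> sqrt (real L) * c" using c0 by (simp add: divide_le_eq)
  define u0 where "u0 = (\<lambda>x. ee \<theta> x * chi L x)"
  define u1 where "u1 = (\<lambda>x. ee \<theta> x * (chi L (x + - 1) - chi L x))"
  define u2 where "u2 = (\<lambda>x. ee \<theta> x * (chi L (x + 1) - chi L x))"
  have fu0: "finite {x. u0 x \<noteq> 0}" and nu0: "l2norm u0 = sqrt (real L)" unfolding u0_def by (rule u0_norm)+
  have fu1: "finite {x. u1 x \<noteq> 0}" unfolding u1_def by (rule ud_norm(1)[OF chi_m1])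
  have nu1: "l2norm u1 \<le> sqrt 2" unfolding u1_def by (rule ud_norm(2)[OF chi_m1])
  have fu2: "finite {x. u2 x \<noteq> 0}" unfolding u2_def by (rule ud_norm(1)[OF chi_p1])
  have nu2: "l2norm u2 \<le> sqrt 2" unfolding u2_def by (rule ud_norm(2)[OF chi_p1])
  define \<rho> where "\<rho> = tens u0 \<phi>"
  have dec: "Az (Mop \<Phi>) z \<rho> = (\<lambda>i. tens u0 E i + tens u1 P i + tens u2 Q i)"
    unfolding \<rho>_def u0_def u1_def u2_def E_def P_def Q_def decomp by simp
  have t0: "finite {i. tens u0 E i \<noteq> 0}" "l2norm (tens u0 E) = l2norm u0 * l2norm E" by (rule tens_norm[OF fu0 fE])+
  have t1: "finite {i. tens u1 P i \<noteq> 0}" "l2norm (tens u1 P) = l2norm u1 * l2norm P" by (rule tens_norm[OF fu1 fP])+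
  have t2: "finite {i. tens u2 Q i \<noteq> 0}" "l2norm (tens u2 Q) = l2norm u2 * l2norm Q" by (rule tens_norm[OF fu2 fQ])+
  have tr: "finite {i. \<rho> i \<noteq> 0}" "l2norm \<rho> = l2norm u0 * l2norm \<phi>" unfolding \<rho>_def by (rule tens_norm[OF fu0 ph(1)])+
  have l01: "(\<lambda>i. tens u0 E i + tens u1 P i) \<in> l2 \<and> l2norm (\<lambda>i. tens u0 E i + tens u1 P i) \<le> l2norm (tens u0 E) + l2norm (tens u1 P)"
    by (rule l2_add[OF finsupp_l2'[OF t0(1)] finsupp_l2'[OF t1(1)]])
  have l012: "l2norm (\<lambda>i. tens u0 E i + tens u1 P i + tens u2 Q i) \<le> l2norm (\<lambda>i. tens u0 E i + tens u1 P i) + l2norm (tens u2 Q)"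
    using l2_add[OF l01[THEN conjunct1] finsupp_l2'[OF t2(1)]] by simp
  have "l2norm (Az (Mop \<Phi>) z \<rho>) \<le> l2norm (tens u0 E) + l2norm (tens u1 P) + l2norm (tens u2 Q)"
    unfolding dec using l01 l012 by linarith
  also have "\<dots> \<le> sqrt (real L) * c + sqrt 2 * l2norm P + sqrt 2 * l2norm Q"
  proof -
    have "l2norm (tens u0 E) \<le> sqrt (real L) * c"
      unfolding t0(2) nu0 c_def unfolding E_def by (rule mult_left_mono[OF ph(3)]) simp
    moreover have "l2norm (tens u1 P) \<le> sqrt 2 * l2norm P" unfolding t1(2) by (rule mult_right_mono[OF nu1 l2norm_nonneg])
    moreover have "l2norm (tens u2 Q) \<le> sqrt 2 * l2norm Q" unfolding t2(2) by (rule mult_right_mono[OF nu2 l2norm_nonneg])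
    ultimately show ?thesis by linarith
  qed
  also have "\<dots> = sqrt (real L) * c + K" by (simp add: K_def algebra_simps)
  also have "\<dots> \<le> 2 * (sqrt (real L) * c)" using KL by linarith
  also have "\<dots> = \<epsilon> * l2norm \<rho>" unfolding tr(2) nu0 c_def by (simp add: algebra_simps)
  finally have "l2norm (Az (Mop \<Phi>) z \<rho>) \<le> \<epsilon> * l2norm \<rho>" .
  moreover have "\<exists>i. \<rho> i \<noteq> 0"
  proof -
    obtain x1 s where "\<phi> (x1, s) \<noteq> 0" using ph(2) by auto
    moreover have "\<rho> ((x1, 0), s) = \<phi> (x1, s)" using L1 by (simp add: \<rho>_def tens_def u0_def ee_def chi_def)
    ultimately show ?thesis by metis
  qed
  ultimately show "\<exists>f. finite {i. f i \<noteq> 0} \<and> (\<exists>i. f i \<noteq> 0) \<and> l2norm (Az (Mop \<Phi>) z f) \<le> \<epsilon> * l2norm f"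
    using tr(1) by blast
qed


lemma int_cos:
  fixes j :: int
  shows "((\<lambda>k. cos (k * of_int j)) has_integral (if j = 0 then 2 * pi else 0)) {0..2 * pi}"
proof (cases "j = 0")
  case True
  show ?thesis using has_integral_const_real[of "1::real" 0 "2 * pi"] True by simp
next
  case False
  have d: "((\<lambda>k. sin (k * of_int j) / of_int j) has_vector_derivative cos (k * of_int j)) (at k within {0..2 * pi})" for k
  proof -
    have "((\<lambda>k. sin (k * of_int j) / of_int j) has_real_derivative cos (k * of_int j)) (at k)"
      using False by (auto intro!: derivative_eq_intros)
    then show ?thesis unfolding has_real_derivative_iff_has_vector_derivative by (rule has_vector_derivative_at_within)
  qed
  have "((\<lambda>k. cos (k * of_int j)) has_integral (sin (2 * pi * of_int j) / of_int j - sin (0 * of_int j) / of_int j)) {0..2 * pi}"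
    by (rule fundamental_theorem_of_calculus) (use d in auto)
  then show ?thesis using False by simp
qed

lemma int_sin:
  fixes j :: int
  shows "((\<lambda>k. sin (k * of_int j)) has_integral 0) {0..2 * pi}"
proof (cases "j = 0")
  case True
  show ?thesis using has_integral_const_real[of "0::real" 0 "2 * pi"] True by simp
next
  case False
  have d: "((\<lambda>k. - cos (k * of_int j) / of_int j) has_vector_derivative sin (k * of_int j)) (at k within {0..2 * pi})" for k
  proof -
    have "((\<lambda>k. - cos (k * of_int j) / of_int j) has_real_derivative sin (k * of_int j)) (at k)"
      using False by (auto intro!: derivative_eq_intros)
    then show ?thesis unfolding has_real_derivative_iff_has_vector_derivative by (rule has_vector_derivative_at_within)
  qed
  have "((\<lambda>k. sin (k * of_int j)) has_integral (- cos (2 * pi * of_int j) / of_int j - - cos (0 * of_int j) / of_int j)) {0..2 * pi}"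
    by (rule fundamental_theorem_of_calculus) (use d in auto)
  then show ?thesis using False by simp
qed

lemma cmod_sq_sum:
  fixes a :: "int \<Rightarrow> complex" and k :: real
  shows "(cmod (\<Sum>n\<in>Y. a n * cis (k * of_int n)))\<^sup>2 =
    (\<Sum>n\<in>Y. \<Sum>m\<in>Y. Re (a n * cnj (a m)) * cos (k * of_int (n - m)) - Im (a n * cnj (a m)) * sin (k * of_int (n - m)))"
proof -
  have "complex_of_real ((cmod (\<Sum>n\<in>Y. a n * cis (k * of_int n)))\<^sup>2)
      = (\<Sum>n\<in>Y. a n * cis (k * of_int n)) * cnj (\<Sum>n\<in>Y. a n * cis (k * of_int n))"
    by (rule complex_norm_square)
  also have "\<dots> = (\<Sum>n\<in>Y. \<Sum>m\<in>Y. (a n * cnj (a m)) * cis (k * of_int (n - m)))"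
    by (simp add: sum_product cis_cnj cis_mult algebra_simps)
  finally have e: "complex_of_real ((cmod (\<Sum>n\<in>Y. a n * cis (k * of_int n)))\<^sup>2) = (\<Sum>n\<in>Y. \<Sum>m\<in>Y. (a n * cnj (a m)) * cis (k * of_int (n - m)))" .
  have "(cmod (\<Sum>n\<in>Y. a n * cis (k * of_int n)))\<^sup>2 = Re (complex_of_real ((cmod (\<Sum>n\<in>Y. a n * cis (k * of_int n)))\<^sup>2))" by simp
  also have "\<dots> = (\<Sum>n\<in>Y. \<Sum>m\<in>Y. Re (a n * cnj (a m)) * cos (k * of_int (n - m)) - Im (a n * cnj (a m)) * sin (k * of_int (n - m)))"
    unfolding e by (simp add: Re_sum cis.sel)
  finally show ?thesis .
qed

lemma parseval:
  fixes a :: "int \<Rightarrow> complex"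
  assumes Y: "finite Y"
  shows "((\<lambda>k. (cmod (\<Sum>n\<in>Y. a n * cis (k * of_int n)))\<^sup>2) has_integral (2 * pi * (\<Sum>n\<in>Y. (cmod (a n))\<^sup>2))) {0..2 * pi}"
proof -
  have i1: "((\<lambda>k. Re (a n * cnj (a m)) * cos (k * of_int (n - m)) - Im (a n * cnj (a m)) * sin (k * of_int (n - m)))
      has_integral (Re (a n * cnj (a m)) * (if n - m = 0 then 2 * pi else 0) - Im (a n * cnj (a m)) * 0)) {0..2 * pi}" for n m
    by (intro has_integral_diff has_integral_mult_right int_cos int_sin)
  have "((\<lambda>k. \<Sum>n\<in>Y. \<Sum>m\<in>Y. Re (a n * cnj (a m)) * cos (k * of_int (n - m)) - Im (a n * cnj (a m)) * sin (k * of_int (n - m)))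
      has_integral (\<Sum>n\<in>Y. \<Sum>m\<in>Y. Re (a n * cnj (a m)) * (if n - m = 0 then 2 * pi else 0) - Im (a n * cnj (a m)) * 0)) {0..2 * pi}"
    by (intro has_integral_sum Y i1)
  moreover have "(\<Sum>n\<in>Y. \<Sum>m\<in>Y. Re (a n * cnj (a m)) * (if n - m = 0 then 2 * pi else 0) - Im (a n * cnj (a m)) * 0)
      = 2 * pi * (\<Sum>n\<in>Y. (cmod (a n))\<^sup>2)"
  proof -
    have "(\<Sum>n\<in>Y. \<Sum>m\<in>Y. Re (a n * cnj (a m)) * (if n - m = 0 then 2 * pi else 0) - Im (a n * cnj (a m)) * 0)
        = (\<Sum>n\<in>Y. \<Sum>m\<in>Y. (if n = m then Re (a n * cnj (a m)) * (2 * pi) else 0))"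
      by (intro sum.cong refl) auto
    also have "\<dots> = (\<Sum>n\<in>Y. Re (a n * cnj (a n)) * (2 * pi))"
      using Y by (simp add: sum.delta)
    also have "\<dots> = (\<Sum>n\<in>Y. 2 * pi * (cmod (a n))\<^sup>2)"
      by (intro sum.cong refl) (simp add: complex_mult_cnj cmod_power2)
    finally show ?thesis by (simp add: sum_distrib_left)
  qed
  ultimately show ?thesis unfolding cmod_sq_sum by simp
qed


definition Fo :: "real \<Rightarrow> int \<Rightarrow> ((int \<times> int) \<times> spin \<Rightarrow> complex) \<Rightarrow> (int \<times> spin \<Rightarrow> complex)" where
  "Fo k N \<rho> = (\<lambda>j. \<Sum>x2\<in>{-N..N}. \<rho> ((fst j, x2), snd j) * cis (k * of_int x2))"

definition inbox :: "int \<Rightarrow> (int \<times> int) \<times> spin \<Rightarrow> bool" where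
  "inbox R i \<longleftrightarrow> \<bar>fst (fst i)\<bar> \<le> R \<and> \<bar>snd (fst i)\<bar> \<le> R"

lemma box_exists:
  assumes "finite {i. \<rho> i \<noteq> 0}"
  shows "\<exists>R\<ge>0. \<forall>i. \<not> inbox R i \<longrightarrow> \<rho> i = 0"
proof -
  define R where "R = Max (insert 0 ((\<lambda>i. max \<bar>fst (fst i)\<bar> \<bar>snd (fst i)\<bar>) ` {i. \<rho> i \<noteq> 0}))"
  have fin: "finite (insert 0 ((\<lambda>i. max \<bar>fst (fst i)\<bar> \<bar>snd (fst i)\<bar>) ` {i. \<rho> i \<noteq> 0}))" using assms by simp
  have R0: "R \<ge> 0" unfolding R_def by (rule Max_ge[OF fin]) simp
  have "inbox R i" if "\<rho> i \<noteq> 0" for i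
  proof -
    have "max \<bar>fst (fst i)\<bar> \<bar>snd (fst i)\<bar> \<le> R" unfolding R_def by (rule Max_ge[OF fin]) (use that in auto)
    then show ?thesis by (simp add: inbox_def)
  qed
  then show ?thesis using R0 by blast
qed

lemma Mop_box:
  assumes "\<And>i. \<not> inbox R i \<Longrightarrow> \<rho> i = 0" and "\<not> inbox (R + 1) i"
  shows "Mop \<Phi> \<rho> i = 0"
proof -
  obtain y1 y2 s where i: "i = ((y1, y2), s)" by (metis prod.collapse)
  have out: "\<bar>y1\<bar> > R + 1 \<or> \<bar>y2\<bar> > R + 1" using assms(2) by (auto simp: i inbox_def)
  have z: "\<rho> ((a, b), t) = 0" if "a \<in> {y1 - 1, y1 + 1}" "b \<in> {y2 - 1, y2 + 1}" for a b t
  proof -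
    have "\<bar>a - y1\<bar> = 1" "\<bar>b - y2\<bar> = 1" using that by auto
    then have "\<not> (\<bar>a\<bar> \<le> R \<and> \<bar>b\<bar> \<le> R)" using out by arith
    then show ?thesis using assms(1)[of "((a, b), t)"] by (simp add: inbox_def)
  qed
  show ?thesis unfolding i
    by (cases s) (simp_all add: Mop_def Aop_def Bop_def row_def z)
qed

lemma sum_shift_m1:
  fixes h :: "int \<Rightarrow> complex"
  assumes "\<And>x. \<bar>x\<bar> \<ge> N \<Longrightarrow> h x = 0"
  shows "(\<Sum>x\<in>{-N..N}. h (x - 1) * cis (k * of_int x)) = cis k * (\<Sum>x\<in>{-N..N}. h x * cis (k * of_int x))"
proof -
  have "(\<Sum>x\<in>{-N..N}. h (x - 1) * cis (k * of_int x)) = (\<Sum>y\<in>{-N-1..N-1}. h y * cis (k * of_int (y + 1)))"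
    by (rule sum.reindex_bij_witness[of _ "\<lambda>y. y + 1" "\<lambda>x. x - 1"]) auto
  also have "\<dots> = (\<Sum>y\<in>{-N-1..N-1}. cis k * (h y * cis (k * of_int y)))"
    by (rule sum.cong) (auto simp: cis_mult algebra_simps)
  also have "\<dots> = cis k * (\<Sum>y\<in>{-N-1..N-1}. h y * cis (k * of_int y))" by (simp add: sum_distrib_left)
  also have "(\<Sum>y\<in>{-N-1..N-1}. h y * cis (k * of_int y)) = (\<Sum>y\<in>{-N+1..N-1}. h y * cis (k * of_int y))"
    by (rule sum.mono_neutral_right) (auto simp: assms)
  also have "\<dots> = (\<Sum>y\<in>{-N..N}. h y * cis (k * of_int y))"
    by (rule sum.mono_neutral_left) (auto simp: assms)
  finally show ?thesis .
qed

lemma sum_shift_p1: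
  fixes h :: "int \<Rightarrow> complex"
  assumes "\<And>x. \<bar>x\<bar> \<ge> N \<Longrightarrow> h x = 0"
  shows "(\<Sum>x\<in>{-N..N}. h (x + 1) * cis (k * of_int x)) = cis (- k) * (\<Sum>x\<in>{-N..N}. h x * cis (k * of_int x))"
proof -
  have "(\<Sum>x\<in>{-N..N}. h (x + 1) * cis (k * of_int x)) = (\<Sum>y\<in>{-N+1..N+1}. h y * cis (k * of_int (y - 1)))"
    by (rule sum.reindex_bij_witness[of _ "\<lambda>y. y - 1" "\<lambda>x. x + 1"]) auto
  also have "\<dots> = (\<Sum>y\<in>{-N+1..N+1}. cis (- k) * (h y * cis (k * of_int y)))"
    by (rule sum.cong) (auto simp: cis_mult algebra_simps)
  also have "\<dots> = cis (- k) * (\<Sum>y\<in>{-N+1..N+1}. h y * cis (k * of_int y))" by (simp add: sum_distrib_left)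
  also have "(\<Sum>y\<in>{-N+1..N+1}. h y * cis (k * of_int y)) = (\<Sum>y\<in>{-N+1..N-1}. h y * cis (k * of_int y))"
    by (rule sum.mono_neutral_right) (auto simp: assms)
  also have "\<dots> = (\<Sum>y\<in>{-N..N}. h y * cis (k * of_int y))"
    by (rule sum.mono_neutral_left) (auto simp: assms)
  finally show ?thesis .
qed

lemma hs1: "(\<Sum>n\<in>Y. c n * (\<alpha> * (u n + \<beta> * v n))) = \<alpha> * ((\<Sum>n\<in>Y. c n * u n) + \<beta> * (\<Sum>n\<in>Y. c n * v n))"
  for c u v :: "'a \<Rightarrow> complex"
  by (induction Y rule: infinite_finite_induct) (simp_all add: algebra_simps)

lemma hs2: "(\<Sum>n\<in>Y. c n * (\<alpha> * (u n - \<beta> * v n))) = \<alpha> * ((\<Sum>n\<in>Y. c n * u n) - \<beta> * (\<Sum>n\<in>Y. c n * v n))"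
  for c u v :: "'a \<Rightarrow> complex"
  by (induction Y rule: infinite_finite_induct) (simp_all add: algebra_simps)

lemma Aop_sum: "Aop \<Phi> (\<lambda>i. \<Sum>n\<in>Y. c n * h n i) = (\<lambda>i. \<Sum>n\<in>Y. c n * Aop \<Phi> (h n) i)"
proof (rule ext)
  fix i :: "int \<times> spin"
  obtain y s where i: "i = (y, s)" by fastforce
  show "Aop \<Phi> (\<lambda>i. \<Sum>n\<in>Y. c n * h n i) i = (\<Sum>n\<in>Y. c n * Aop \<Phi> (h n) i)"
    unfolding i by (cases s) (simp_all only: Aop_def prod.case if_True if_False spin.distinct simp_thms hs1)
qed

lemma Bop_sum: "Bop \<Phi> (\<lambda>i. \<Sum>n\<in>Y. c n * h n i) = (\<lambda>i. \<Sum>n\<in>Y. c n * Bop \<Phi> (h n) i)"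
proof (rule ext)
  fix i :: "int \<times> spin"
  obtain y s where i: "i = (y, s)" by fastforce
  show "Bop \<Phi> (\<lambda>i. \<Sum>n\<in>Y. c n * h n i) i = (\<Sum>n\<in>Y. c n * Bop \<Phi> (h n) i)"
    unfolding i by (cases s) (simp_all only: Bop_def prod.case if_True if_False spin.distinct simp_thms hs2)
qed

lemma Aop_scale': "Aop \<Phi> (\<lambda>i. c * g i) = (\<lambda>i. c * Aop \<Phi> g i)"
  by (rule ext) (auto simp: Aop_def algebra_simps split: prod.splits)

lemma Bop_scale': "Bop \<Phi> (\<lambda>i. c * g i) = (\<lambda>i. c * Bop \<Phi> g i)"
  by (rule ext) (auto simp: Bop_def algebra_simps split: prod.splits)

lemma intertwine:
  assumes z: "\<And>i. \<bar>snd (fst i)\<bar> \<ge> N \<Longrightarrow> \<rho> i = 0"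
  shows "Fo k N (Mop \<Phi> \<rho>) = uamoW \<Phi> k (Fo k N \<rho>)"
proof -
  have r1: "(\<lambda>i. \<Sum>x2\<in>{-N..N}. cis (k * of_int x2) * row \<rho> (x2 - 1) i) = (\<lambda>i. cis k * Fo k N \<rho> i)"
  proof (rule ext)
    fix i :: "int \<times> spin"
    have "(\<Sum>x2\<in>{-N..N}. cis (k * of_int x2) * row \<rho> (x2 - 1) i) = (\<Sum>x2\<in>{-N..N}. \<rho> ((fst i, x2 - 1), snd i) * cis (k * of_int x2))"
      by (rule sum.cong) (auto simp: row_def split: prod.splits)
    also have "\<dots> = cis k * Fo k N \<rho> i" unfolding Fo_def
      by (rule sum_shift_m1[where h = "\<lambda>x. \<rho> ((fst i, x), snd i)"]) (use z in auto)
    finally show "(\<Sum>x2\<in>{-N..N}. cis (k * of_int x2) * row \<rho> (x2 - 1) i) = cis k * Fo k N \<rho> i" .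
  qed
  have r2: "(\<lambda>i. \<Sum>x2\<in>{-N..N}. cis (k * of_int x2) * row \<rho> (x2 + 1) i) = (\<lambda>i. cis (- k) * Fo k N \<rho> i)"
  proof (rule ext)
    fix i :: "int \<times> spin"
    have "(\<Sum>x2\<in>{-N..N}. cis (k * of_int x2) * row \<rho> (x2 + 1) i) = (\<Sum>x2\<in>{-N..N}. \<rho> ((fst i, x2 + 1), snd i) * cis (k * of_int x2))"
      by (rule sum.cong) (auto simp: row_def split: prod.splits)
    also have "\<dots> = cis (- k) * Fo k N \<rho> i" unfolding Fo_def
      by (rule sum_shift_p1[where h = "\<lambda>x. \<rho> ((fst i, x), snd i)"]) (use z in auto)
    finally show "(\<Sum>x2\<in>{-N..N}. cis (k * of_int x2) * row \<rho> (x2 + 1) i) = cis (- k) * Fo k N \<rho> i" .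
  qed
  have "Fo k N (Mop \<Phi> \<rho>) = (\<lambda>j. (\<Sum>x2\<in>{-N..N}. cis (k * of_int x2) * Aop \<Phi> (row \<rho> (x2 - 1)) j)
        + (\<Sum>x2\<in>{-N..N}. cis (k * of_int x2) * Bop \<Phi> (row \<rho> (x2 + 1)) j))"
    by (rule ext) (auto simp: Fo_def Mop_def sum.distrib algebra_simps split: prod.splits)
  also have "\<dots> = (\<lambda>j. Aop \<Phi> (\<lambda>i. \<Sum>x2\<in>{-N..N}. cis (k * of_int x2) * row \<rho> (x2 - 1) i) j
        + Bop \<Phi> (\<lambda>i. \<Sum>x2\<in>{-N..N}. cis (k * of_int x2) * row \<rho> (x2 + 1) i) j)"
    unfolding Aop_sum Bop_sum ..
  also have "\<dots> = (\<lambda>j. cis k * Aop \<Phi> (Fo k N \<rho>) j + cis (- k) * Bop \<Phi> (Fo k N \<rho>) j)"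
    unfolding r1 r2 Aop_scale' Bop_scale' ..
  also have "\<dots> = uamoW \<Phi> k (Fo k N \<rho>)" unfolding uamo_AB ..
  finally show ?thesis .
qed

lemma Fo_lin: "Fo k N (\<lambda>i. a i - z * b i) = (\<lambda>i. Fo k N a i - z * Fo k N b i)"
  by (rule ext) (simp add: Fo_def sum_subtractf sum_distrib_left algebra_simps)

lemma Az_Fo:
  assumes "\<And>i. \<bar>snd (fst i)\<bar> \<ge> N \<Longrightarrow> \<rho> i = 0"
  shows "Fo k N (Az (Mop \<Phi>) z \<rho>) = Az (uamoW \<Phi> k) z (Fo k N \<rho>)"
proof -
  have "Fo k N (\<lambda>i. Mop \<Phi> \<rho> i - z * \<rho> i) = (\<lambda>i. Fo k N (Mop \<Phi> \<rho>) i - z * Fo k N \<rho> i)" by (rule Fo_lin)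
  then show ?thesis unfolding Az_def by (simp add: intertwine[OF assms])
qed


lemma normbox:
  fixes f :: "(int \<times> int) \<times> spin \<Rightarrow> complex"
  assumes z: "\<And>i. \<not> inbox N i \<Longrightarrow> f i = 0"
  shows "f \<in> l2" "(l2norm f)\<^sup>2 = (\<Sum>j\<in>{-N..N} \<times> UNIV. \<Sum>x2\<in>{-N..N}. (cmod (f ((fst j, x2), snd j)))\<^sup>2)"
proof -
  define m where "m = (\<lambda>p::(int \<times> spin) \<times> int. ((fst (fst p), snd p), snd (fst p)))"
  define D where "D = ({-N..N} \<times> (UNIV::spin set)) \<times> {-N..N}"
  define B where "B = m ` D"
  have fB: "finite B" by (simp add: B_def D_def)
  have inj: "inj_on m D" by (auto simp: m_def inj_on_def D_def prod_eq_iff)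
  have zB: "f i = 0" if "i \<notin> B" for i
  proof -
    have "\<not> inbox N i"
    proof
      assume "inbox N i"
      then have "((fst (fst i), snd i), snd (fst i)) \<in> D" by (auto simp: inbox_def D_def)
      moreover have "i = m ((fst (fst i), snd i), snd (fst i))" by (simp add: m_def)
      ultimately have "i \<in> B" unfolding B_def by blast
      then show False using that by simp
    qed
    then show ?thesis by (rule z)
  qed
  show "f \<in> l2" by (rule finsupp_l2(1)[OF fB zB])
  have "l2norm f = sqrt (\<Sum>i\<in>B. (cmod (f i))\<^sup>2)" by (rule finsupp_l2(2)[OF fB zB])
  then have "(l2norm f)\<^sup>2 = (\<Sum>i\<in>B. (cmod (f i))\<^sup>2)" by (simp add: sum_nonneg)
  also have "\<dots> = (\<Sum>p\<in>D. (cmod (f (m p)))\<^sup>2)" unfolding B_def by (rule sum.reindex[OF inj, unfolded comp_def])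
  also have "\<dots> = (\<Sum>j\<in>{-N..N} \<times> UNIV. \<Sum>x2\<in>{-N..N}. (cmod (f ((fst j, x2), snd j)))\<^sup>2)"
    unfolding D_def m_def by (simp add: sum.cartesian_product case_prod_beta)
  finally show "(l2norm f)\<^sup>2 = (\<Sum>j\<in>{-N..N} \<times> UNIV. \<Sum>x2\<in>{-N..N}. (cmod (f ((fst j, x2), snd j)))\<^sup>2)" .
qed

lemma normbox1:
  fixes g :: "int \<times> spin \<Rightarrow> complex"
  assumes z: "\<And>x1 s. \<bar>x1\<bar> > N \<Longrightarrow> g (x1, s) = 0"
  shows "finite {i. g i \<noteq> 0}" "(l2norm g)\<^sup>2 = (\<Sum>j\<in>{-N..N} \<times> UNIV. (cmod (g j))\<^sup>2)"
proof -
  have fX: "finite ({-N..N} \<times> (UNIV::spin set))" by simp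
  have zX: "g i = 0" if "i \<notin> {-N..N} \<times> UNIV" for i
    using z[of "fst i" "snd i"] that by (cases i) auto
  show "finite {i. g i \<noteq> 0}" using zX by (intro finite_subset[OF _ fX]) blast
  have "l2norm g = sqrt (\<Sum>j\<in>{-N..N} \<times> UNIV. (cmod (g j))\<^sup>2)" by (rule finsupp_l2(2)[OF fX zX])
  then show "(l2norm g)\<^sup>2 = (\<Sum>j\<in>{-N..N} \<times> UNIV. (cmod (g j))\<^sup>2)" by (simp add: sum_nonneg)
qed

lemma Fo_zero:
  assumes "\<And>i. \<not> inbox N i \<Longrightarrow> \<rho> i = 0" "\<bar>x1\<bar> > N"
  shows "Fo k N \<rho> (x1, s) = 0"
  unfolding Fo_def using assms by (auto simp: inbox_def intro!: sum.neutral)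

lemma parseval_vec:
  assumes "finite X"
  shows "((\<lambda>k. \<Sum>j\<in>X. (cmod (Fo k N \<rho> j))\<^sup>2) has_integral
      (2 * pi * (\<Sum>j\<in>X. \<Sum>x2\<in>{-N..N}. (cmod (\<rho> ((fst j, x2), snd j)))\<^sup>2))) {0..2 * pi}"
proof -
  have "((\<lambda>k. \<Sum>j\<in>X. (cmod (Fo k N \<rho> j))\<^sup>2) has_integral
      (\<Sum>j\<in>X. 2 * pi * (\<Sum>x2\<in>{-N..N}. (cmod (\<rho> ((fst j, x2), snd j)))\<^sup>2))) {0..2 * pi}"
    unfolding Fo_def by (intro has_integral_sum assms parseval) simp
  then show ?thesis by (simp add: sum_distrib_left)
qed

lemma AE_M_fiber:
  assumes a: "AEfin (Mop \<Phi>) z" and e: "\<epsilon> > 0"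
  shows "\<exists>k g. finite {i. g i \<noteq> 0} \<and> (\<exists>i. g i \<noteq> 0) \<and> l2norm (Az (uamoW \<Phi> k) z g) \<le> \<epsilon> * l2norm g"
proof -
  obtain \<rho> where r: "finite {i. \<rho> i \<noteq> 0}" "\<exists>i. \<rho> i \<noteq> 0" "l2norm (Az (Mop \<Phi>) z \<rho>) \<le> (\<epsilon> / 2) * l2norm \<rho>"
    using a e unfolding AEfin_def by (meson half_gt_zero)
  define \<sigma> where "\<sigma> = Az (Mop \<Phi>) z \<rho>"
  have rl2: "\<rho> \<in> l2" by (rule finsupp_l2'[OF r(1)])
  have rpos: "l2norm \<rho> > 0"
  proof -
    obtain i where "\<rho> i \<noteq> 0" using r(2) by blast
    then have "l2norm \<rho> \<noteq> 0" using l2norm_eq0[OF rl2, of i] by blast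
    then show ?thesis using l2norm_nonneg[of \<rho>] by linarith
  qed
  obtain R where R: "R \<ge> 0" "\<And>i. \<not> inbox R i \<Longrightarrow> \<rho> i = 0" using box_exists[OF r(1)] by blast
  define N where "N = R + 1"
  have zr: "\<rho> i = 0" if "\<not> inbox N i" for i using R(2)[of i] that by (auto simp: inbox_def N_def)
  have zr2: "\<rho> i = 0" if "\<bar>snd (fst i)\<bar> \<ge> N" for i using R(2)[of i] that by (auto simp: inbox_def N_def)
  have zs: "\<sigma> i = 0" if "\<not> inbox N i" for i
    using Mop_box[OF R(2) that[unfolded N_def]] zr[OF that] by (simp add: \<sigma>_def Az_def)
  define X where "X = {-N..N} \<times> (UNIV :: spin set)"
  have fX: "finite X" by (simp add: X_def)
  define A where "A k = (\<Sum>j\<in>X. (cmod (Fo k N \<sigma> j))\<^sup>2)" for k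
  define B where "B k = (\<Sum>j\<in>X. (cmod (Fo k N \<rho> j))\<^sup>2)" for k
  have hA: "(A has_integral (2 * pi * (l2norm \<sigma>)\<^sup>2)) {0..2 * pi}"
  proof -
    have "(A has_integral (2 * pi * (\<Sum>j\<in>{-N..N} \<times> UNIV. \<Sum>x2\<in>{-N..N}. (cmod (\<sigma> ((fst j, x2), snd j)))\<^sup>2))) {0..2 * pi}"
      unfolding A_def X_def by (rule parseval_vec) simp
    then show ?thesis using normbox(2)[OF zs] by simp
  qed
  have hB: "(B has_integral (2 * pi * (l2norm \<rho>)\<^sup>2)) {0..2 * pi}"
  proof -
    have "(B has_integral (2 * pi * (\<Sum>j\<in>{-N..N} \<times> UNIV. \<Sum>x2\<in>{-N..N}. (cmod (\<rho> ((fst j, x2), snd j)))\<^sup>2))) {0..2 * pi}"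
      unfolding B_def X_def by (rule parseval_vec) simp
    then show ?thesis using normbox(2)[OF zr] by simp
  qed
  have hD: "((\<lambda>k. A k - \<epsilon>\<^sup>2 * B k) has_integral (2 * pi * (l2norm \<sigma>)\<^sup>2 - \<epsilon>\<^sup>2 * (2 * pi * (l2norm \<rho>)\<^sup>2))) {0..2 * pi}"
    by (intro has_integral_diff has_integral_mult_right hA hB)
  have neg: "2 * pi * (l2norm \<sigma>)\<^sup>2 - \<epsilon>\<^sup>2 * (2 * pi * (l2norm \<rho>)\<^sup>2) < 0"
  proof -
    have "l2norm \<sigma> \<le> (\<epsilon> / 2) * l2norm \<rho>" using r(3) by (simp add: \<sigma>_def)
    then have "(l2norm \<sigma>)\<^sup>2 \<le> ((\<epsilon> / 2) * l2norm \<rho>)\<^sup>2" by (rule power_mono[OF _ l2norm_nonneg])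
    also have "\<dots> < \<epsilon>\<^sup>2 * (l2norm \<rho>)\<^sup>2" using e rpos by (simp add: power_mult_distrib power_divide)
    finally show ?thesis by simp
  qed
  have "\<exists>k. A k - \<epsilon>\<^sup>2 * B k < 0"
  proof (rule ccontr)
    assume "\<not> (\<exists>k. A k - \<epsilon>\<^sup>2 * B k < 0)"
    then have "\<And>k. k \<in> {0..2 * pi} \<Longrightarrow> 0 \<le> A k - \<epsilon>\<^sup>2 * B k" by (meson not_le)
    then have "0 \<le> 2 * pi * (l2norm \<sigma>)\<^sup>2 - \<epsilon>\<^sup>2 * (2 * pi * (l2norm \<rho>)\<^sup>2)" by (rule has_integral_nonneg[OF hD])
    then show False using neg by simp
  qed
  then obtain k where k: "A k - \<epsilon>\<^sup>2 * B k < 0" by blast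
  define g where "g = Fo k N \<rho>"
  have gz: "g (x1, s) = 0" if "\<bar>x1\<bar> > N" for x1 s unfolding g_def by (rule Fo_zero[OF zr that])
  have az: "Az (uamoW \<Phi> k) z g = Fo k N \<sigma>" unfolding g_def \<sigma>_def by (rule Az_Fo[OF zr2, symmetric])
  have azz: "Az (uamoW \<Phi> k) z g (x1, s) = 0" if "\<bar>x1\<bar> > N" for x1 s unfolding az by (rule Fo_zero[OF zs that])
  have ng: "(l2norm g)\<^sup>2 = B k" using normbox1(2)[of N g, OF gz] by (simp add: B_def g_def X_def)
  have na: "(l2norm (Az (uamoW \<Phi> k) z g))\<^sup>2 = A k" using normbox1(2)[of N "Az (uamoW \<Phi> k) z g", OF azz] by (simp add: A_def az X_def)
  have A0: "A k \<ge> 0" by (simp add: A_def sum_nonneg)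
  have Bpos: "B k > 0"
  proof -
    have "\<epsilon>\<^sup>2 * B k > 0" using k A0 by linarith
    then show ?thesis using e by (simp add: zero_less_mult_iff)
  qed
  have gpos: "l2norm g > 0" using Bpos ng l2norm_nonneg[of g] by (metis power_zero_numeral order_le_less)
  have "\<exists>i. g i \<noteq> 0"
  proof (rule ccontr)
    assume "\<not> (\<exists>i. g i \<noteq> 0)"
    then have "g = (\<lambda>i. 0)" by auto
    moreover have "l2norm (\<lambda>i::int \<times> spin. 0::complex) = 0" by (rule l2_zero(2))
    ultimately show False using gpos by simp
  qed
  moreover have "l2norm (Az (uamoW \<Phi> k) z g) \<le> \<epsilon> * l2norm g"
  proof -
    have "(l2norm (Az (uamoW \<Phi> k) z g))\<^sup>2 < (\<epsilon> * l2norm g)\<^sup>2"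
      using k unfolding na power_mult_distrib ng by simp
    then have "l2norm (Az (uamoW \<Phi> k) z g) < \<epsilon> * l2norm g"
      by (rule power2_less_imp_less) (use e l2norm_nonneg[of g] in simp)
    then show ?thesis by simp
  qed
  moreover have "finite {i. g i \<noteq> 0}" by (rule normbox1(1)[of N g, OF gz])
  ultimately show ?thesis by blast
qed


theorem mainTheorem3:
  fixes \<Phi> \<theta> :: real
  assumes "0 \<le> \<Phi>" and "\<Phi> < 2 * pi"
    and "\<Phi> / (2 * pi) \<notin> \<rat>"
    and "0 \<le> \<theta>" and "\<theta> < 2 * pi"
  shows "op_spectrum (magW \<Phi>) = op_spectrum (uamoW \<Phi> \<theta>)"
proof (rule set_eqI)
  fix z :: complex
  have "z \<in> op_spectrum (magW \<Phi>) \<longleftrightarrow> AEfin (magW \<Phi>) z"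
    by (rule spec_char[OF goodlin_magW(1) goodlin_magW(2) magW_inv(1) magW_inv(2)])
  also have "\<dots> \<longleftrightarrow> AEfin (Mop \<Phi>) z" by (rule AE_magW_M)
  also have "\<dots> \<longleftrightarrow> AEfin (uamoW \<Phi> \<theta>) z"
  proof
    assume "AEfin (Mop \<Phi>) z"
    then show "AEfin (uamoW \<Phi> \<theta>) z" by (intro density[OF assms(3)] AE_M_fiber)
  next
    assume "AEfin (uamoW \<Phi> \<theta>) z"
    then show "AEfin (Mop \<Phi>) z" by (rule AE_uamo_M)
  qed
  also have "\<dots> \<longleftrightarrow> z \<in> op_spectrum (uamoW \<Phi> \<theta>)"
    by (rule spec_char[OF goodlin_uamoW(1) goodlin_uamoW(2) uamoW_inv(1) uamoW_inv(2), symmetric])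
  finally show "z \<in> op_spectrum (magW \<Phi>) \<longleftrightarrow> z \<in> op_spectrum (uamoW \<Phi> \<theta>)" .
qed

end
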